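(* Let $n=p$ be prime, let $v\in\mathbb{R}^p$ have pairwise distinct coordinates, let $C$ be the elementary symmetric curve associated to $v$, and let $C_i$ be any irreducible component of $C$. Then the stabilizer $\mathrm{stab}(C_i)$ of $C_i$ under the $S_p$-action on the set of irreducible components of $C$ contains a $p$-cycle.
   Context: For $v=(c_1,\dots,c_n)$, the elementary symmetric curve associated to $v$ is the complex algebraic variety $C$ (in $\mathbb{C}^n$, viewed inside $\mathbb{P}^n_{\mathbb{C}}$) cut out by $e_k(x_1,\dots,x_n)=e_k(c_1,\dots,c_n)$ for $k=1,\dots,n-1$, where $e_k$ is the $k$-th elementary symmetric polynomial. $S_n$ acts on $\mathbb{C}^n$ by permuting coordinates, which permutes the irreducible components of $C$. *)

theory Defs
  imports Complex_Main "HOL-Combinatorics.Combinatorics" "HOL-Computational_Algebra.Primes"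
begin

text \<open>Points of complex affine n-space: functions nat to complex vanishing outside {..<n}.\<close>
definition aspace :: "nat \<Rightarrow> (nat \<Rightarrow> complex) set" where
  "aspace n = {x. \<forall>i. n \<le> i \<longrightarrow> x i = 0}"

inductive_set poly_fun :: "nat \<Rightarrow> ((nat \<Rightarrow> complex) \<Rightarrow> complex) set" for n where
  const: "(\<lambda>x. c) \<in> poly_fun n"
| var: "i < n \<Longrightarrow> (\<lambda>x. x i) \<in> poly_fun n"
| add: "f \<in> poly_fun n \<Longrightarrow> g \<in> poly_fun n \<Longrightarrow> (\<lambda>x. f x + g x) \<in> poly_fun n"
| mult: "f \<in> poly_fun n \<Longrightarrow> g \<in> poly_fun n \<Longrightarrow> (\<lambda>x. f x * g x) \<in> poly_fun n"

definition zariski_closed :: "nat \<Rightarrow> (nat \<Rightarrow> complex) set \<Rightarrow> bool" where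
  "zariski_closed n S \<longleftrightarrow> (\<exists>F \<subseteq> poly_fun n. S = {x \<in> aspace n. \<forall>f\<in>F. f x = 0})"

definition zariski_irreducible :: "nat \<Rightarrow> (nat \<Rightarrow> complex) set \<Rightarrow> bool" where
  "zariski_irreducible n S \<longleftrightarrow> S \<noteq> {} \<and> zariski_closed n S \<and>
     (\<forall>A B. zariski_closed n A \<longrightarrow> zariski_closed n B \<longrightarrow> S = A \<union> B \<longrightarrow> S = A \<or> S = B)"

definition irreducible_component :: "nat \<Rightarrow> (nat \<Rightarrow> complex) set \<Rightarrow> (nat \<Rightarrow> complex) set \<Rightarrow> bool" where
  "irreducible_component n C Z \<longleftrightarrow> zariski_irreducible n Z \<and> Z \<subseteq> C \<and>
     (\<forall>W. zariski_irreducible n W \<longrightarrow> Z \<subseteq> W \<longrightarrow> W \<subseteq> C \<longrightarrow> W = Z)"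

definition esym :: "nat \<Rightarrow> nat \<Rightarrow> (nat \<Rightarrow> 'a::comm_ring_1) \<Rightarrow> 'a" where
  "esym n k x = (\<Sum>S | S \<subseteq> {..<n} \<and> card S = k. \<Prod>i\<in>S. x i)"

definition elem_sym_curve :: "nat \<Rightarrow> (nat \<Rightarrow> complex) \<Rightarrow> (nat \<Rightarrow> complex) set" where
  "elem_sym_curve n c = {x \<in> aspace n. \<forall>k \<in> {1..n-1}. esym n k x = esym n k c}"

definition perm_pt :: "(nat \<Rightarrow> nat) \<Rightarrow> (nat \<Rightarrow> complex) \<Rightarrow> (nat \<Rightarrow> complex)" where
  "perm_pt \<sigma> x = x \<circ> inv \<sigma>"

definition is_full_cycle :: "nat \<Rightarrow> (nat \<Rightarrow> nat) \<Rightarrow> bool" where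
  "is_full_cycle n \<sigma> \<longleftrightarrow> \<sigma> permutes {..<n} \<and>
     (\<exists>cs. distinct cs \<and> length cs = n \<and> set cs = {..<n} \<and> \<sigma> = cycle_of_list cs)"

end

theory Submission
  imports Defs "HOL-Computational_Algebra.Fundamental_Theorem_Algebra" "HOL-Complex_Analysis.Complex_Analysis"
begin

lemma pf_const: "(\<lambda>x. c) \<in> poly_fun n" by (rule poly_fun.const)
lemma pf_var: "i < n \<Longrightarrow> (\<lambda>x. x i) \<in> poly_fun n" by (rule poly_fun.var)
lemma pf_add: "f \<in> poly_fun n \<Longrightarrow> g \<in> poly_fun n \<Longrightarrow> (\<lambda>x. f x + g x) \<in> poly_fun n"
  by (rule poly_fun.add)
lemma pf_mult: "f \<in> poly_fun n \<Longrightarrow> g \<in> poly_fun n \<Longrightarrow> (\<lambda>x. f x * g x) \<in> poly_fun n"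
  by (rule poly_fun.mult)

lemma pf_neg: "f \<in> poly_fun n \<Longrightarrow> (\<lambda>x. - f x) \<in> poly_fun n"
  using pf_mult[OF pf_const[of "-1"]] by simp

lemma pf_diff: "f \<in> poly_fun n \<Longrightarrow> g \<in> poly_fun n \<Longrightarrow> (\<lambda>x. f x - g x) \<in> poly_fun n"
  using pf_add[OF _ pf_neg[of g]] by simp

lemma pf_sum: "finite A \<Longrightarrow> (\<And>a. a \<in> A \<Longrightarrow> f a \<in> poly_fun n) \<Longrightarrow> (\<lambda>x. \<Sum>a\<in>A. f a x) \<in> poly_fun n"
proof (induction A rule: finite_induct)
  case empty then show ?case by (simp add: pf_const)
next
  case (insert a A) then show ?case by (simp add: pf_add)
qed

lemma pf_prod: "finite A \<Longrightarrow> (\<And>a. a \<in> A \<Longrightarrow> f a \<in> poly_fun n) \<Longrightarrow> (\<lambda>x. \<Prod>a\<in>A. f a x) \<in> poly_fun n"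
proof (induction A rule: finite_induct)
  case empty then show ?case by (simp add: pf_const)
next
  case (insert a A) then show ?case by (simp add: pf_mult)
qed

lemma pf_pow: "f \<in> poly_fun n \<Longrightarrow> (\<lambda>x. f x ^ m) \<in> poly_fun n"
  by (induction m) (simp_all add: pf_const pf_mult)

lemma pf_mono: "f \<in> poly_fun n \<Longrightarrow> n \<le> m \<Longrightarrow> f \<in> poly_fun m"
proof (induction rule: poly_fun.induct)
  case (const c) show ?case by (rule pf_const)
next
  case (var i) then show ?case by (intro pf_var) simp
next
  case (add f g) then show ?case by (intro pf_add) simp_all
next
  case (mult f g) then show ?case by (intro pf_mult) simp_all
qed

lemma pf_subst: "f \<in> poly_fun n \<Longrightarrow> (\<And>i. i < n \<Longrightarrow> (\<lambda>x. \<rho> x i) \<in> poly_fun m) \<Longrightarrow> (\<lambda>x. f (\<rho> x)) \<in> poly_fun m"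
proof (induction rule: poly_fun.induct)
  case (const c) show ?case by (rule pf_const)
next
  case (var i) then show ?case by simp
next
  case (add f g) then show ?case using pf_add[of "\<lambda>x. f (\<rho> x)" m "\<lambda>x. g (\<rho> x)"] by simp
next
  case (mult f g) then show ?case using pf_mult[of "\<lambda>x. f (\<rho> x)" m "\<lambda>x. g (\<rho> x)"] by simp
qed

lemma pf_indep: "f \<in> poly_fun n \<Longrightarrow> (\<And>i. i < n \<Longrightarrow> x i = y i) \<Longrightarrow> f x = f y"
  by (induction rule: poly_fun.induct) auto

definition cpf :: "nat \<Rightarrow> ((nat \<Rightarrow> complex) \<Rightarrow> complex poly) \<Rightarrow> bool" where
  "cpf n Q \<longleftrightarrow> (\<forall>j. (\<lambda>x. coeff (Q x) j) \<in> poly_fun n) \<and> (\<exists>D. \<forall>x. degree (Q x) \<le> D)"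

lemma cpf_const: "cpf n (\<lambda>x. [:c:])"
proof -
  have "(\<lambda>x. coeff [:c:] j) \<in> poly_fun n" for j by (rule pf_const)
  moreover have "degree [:c:] \<le> 0" by simp
  ultimately show ?thesis unfolding cpf_def by blast
qed

lemma cpf_X: "cpf n (\<lambda>x. [:0, 1:])"
proof -
  have "(\<lambda>x. coeff [:0, 1::complex:] j) \<in> poly_fun n" for j by (rule pf_const)
  moreover have "degree [:0, 1::complex:] \<le> 1" by simp
  ultimately show ?thesis unfolding cpf_def by blast
qed

lemma cpf_var: "i < n \<Longrightarrow> cpf n (\<lambda>x. [:x i:])"
proof -
  assume i: "i < n"
  have "(\<lambda>x. coeff [:x i:] j) \<in> poly_fun n" for j
  proof (cases j)
    case 0 then show ?thesis using pf_var[OF i] by simp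
  next
    case (Suc m) then show ?thesis using pf_const[of 0] by simp
  qed
  then show ?thesis unfolding cpf_def by auto
qed

lemma cpf_add: "cpf n P \<Longrightarrow> cpf n Q \<Longrightarrow> cpf n (\<lambda>x. P x + Q x)"
  unfolding cpf_def
proof (elim conjE exE, intro conjI)
  fix D1 D2 assume a: "\<forall>j. (\<lambda>x. coeff (P x) j) \<in> poly_fun n" "\<forall>j. (\<lambda>x. coeff (Q x) j) \<in> poly_fun n"
    and d: "\<forall>x. degree (P x) \<le> D1" "\<forall>x. degree (Q x) \<le> D2"
  show "\<forall>j. (\<lambda>x. coeff (P x + Q x) j) \<in> poly_fun n" using a by (simp add: pf_add)
  show "\<exists>D. \<forall>x. degree (P x + Q x) \<le> D"
  proof (rule exI[of _ "max D1 D2"], rule allI)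
    fix x
    have "degree (P x) \<le> max D1 D2" "degree (Q x) \<le> max D1 D2" using d[rule_format, of x] by auto
    then show "degree (P x + Q x) \<le> max D1 D2" by (rule degree_add_le)
  qed
qed

lemma cpf_mult: "cpf n P \<Longrightarrow> cpf n Q \<Longrightarrow> cpf n (\<lambda>x. P x * Q x)"
  unfolding cpf_def
proof (elim conjE exE, intro conjI)
  fix D1 D2 assume a: "\<forall>j. (\<lambda>x. coeff (P x) j) \<in> poly_fun n" "\<forall>j. (\<lambda>x. coeff (Q x) j) \<in> poly_fun n"
    and d: "\<forall>x. degree (P x) \<le> D1" "\<forall>x. degree (Q x) \<le> D2"
  show "\<forall>j. (\<lambda>x. coeff (P x * Q x) j) \<in> poly_fun n"
    using a by (simp add: coeff_mult pf_sum pf_mult)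
  show "\<exists>D. \<forall>x. degree (P x * Q x) \<le> D"
  proof (rule exI[of _ "D1 + D2"], rule allI)
    fix x
    have "degree (P x * Q x) \<le> degree (P x) + degree (Q x)" by (rule degree_mult_le)
    also have "\<dots> \<le> D1 + D2" using d[rule_format, of x] by (rule add_mono)
    finally show "degree (P x * Q x) \<le> D1 + D2" .
  qed
qed

lemma cpf_one: "cpf n (\<lambda>x. 1)"
  using cpf_const[of n 1] by (simp add: one_pCons)

lemma cpf_pow: "cpf n P \<Longrightarrow> cpf n (\<lambda>x. P x ^ m)"
  by (induction m) (simp_all add: cpf_mult cpf_one)

lemma pf_rep:
  assumes "f \<in> poly_fun n"
  shows "\<exists>Q. cpf n Q \<and> (\<forall>x t. f (x(k:=t)) = poly (Q x) t)"
  using assms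
proof (induction rule: poly_fun.induct)
  case (const c)
  show ?case by (rule exI[of _ "\<lambda>x. [:c:]"]) (simp add: cpf_const)
next
  case (var i)
  show ?case
  proof (cases "i = k")
    case True
    show ?thesis by (rule exI[of _ "\<lambda>x. [:0, 1:]"]) (simp add: cpf_X True)
  next
    case False
    show ?thesis by (rule exI[of _ "\<lambda>x. [:x i:]"]) (simp add: cpf_var var False)
  qed
next
  case (add f g)
  then obtain P Q where "cpf n P" "\<forall>x t. f (x(k:=t)) = poly (P x) t" "cpf n Q" "\<forall>x t. g (x(k:=t)) = poly (Q x) t"
    by blast
  then have "cpf n (\<lambda>x. P x + Q x) \<and> (\<forall>x t. f (x(k:=t)) + g (x(k:=t)) = poly ((\<lambda>x. P x + Q x) x) t)"
    by (simp add: cpf_add)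
  then show ?case by (rule exI[of _ "\<lambda>x. P x + Q x"])
next
  case (mult f g)
  then obtain P Q where "cpf n P" "\<forall>x t. f (x(k:=t)) = poly (P x) t" "cpf n Q" "\<forall>x t. g (x(k:=t)) = poly (Q x) t"
    by blast
  then have "cpf n (\<lambda>x. P x * Q x) \<and> (\<forall>x t. f (x(k:=t)) * g (x(k:=t)) = poly ((\<lambda>x. P x * Q x) x) t)"
    by (simp add: cpf_mult)
  then show ?case by (rule exI[of _ "\<lambda>x. P x * Q x"])
qed

lemma pf_mod_aux:
  assumes Qc: "\<forall>j. (\<lambda>x. coeff (Q x) j) \<in> poly_fun n" and Qd: "\<forall>x. degree (Q x) \<le> D"
    and Rc: "\<forall>j. (\<lambda>x. coeff (R x) j) \<in> poly_fun n" and Rd: "\<forall>x. degree (R x) = d"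
    and Rl: "\<forall>x. coeff (R x) d = 1" and d0: "d > 0"
  shows "(\<lambda>x. coeff (Q x mod R x) j) \<in> poly_fun n"
  using Qc Qd
proof (induction D arbitrary: Q rule: less_induct)
  case (less D Q)
  show ?case
  proof (cases "D < d")
    case True
    then have "Q x mod R x = Q x" for x
      using less.prems(2) Rd by (intro mod_poly_less) (metis le_less_trans)
    then show ?thesis using less.prems(1) by simp
  next
    case False
    define Q' where "Q' x = Q x - monom (coeff (Q x) D) (D - d) * R x" for x
    have m: "Q' x mod R x = Q x mod R x" for x
    proof -
      have e: "Q' x = Q x + (- monom (coeff (Q x) D) (D - d)) * R x" unfolding Q'_def by simp
      show ?thesis unfolding e by (rule mod_mult_self1)
    qed
    have cQ': "\<forall>j. (\<lambda>x. coeff (Q' x) j) \<in> poly_fun n"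
    proof
      fix j
      have "(\<lambda>x. coeff (Q' x) j) = (\<lambda>x. coeff (Q x) j - (if j < D - d then 0 else coeff (Q x) D * coeff (R x) (j - (D - d))))"
        unfolding Q'_def by (simp add: coeff_monom_mult)
      moreover have "(\<lambda>x. coeff (Q x) j - (if j < D - d then 0 else coeff (Q x) D * coeff (R x) (j - (D - d)))) \<in> poly_fun n"
        using less.prems(1) Rc by (cases "j < D - d") (simp_all add: pf_diff pf_const pf_mult)
      ultimately show "(\<lambda>x. coeff (Q' x) j) \<in> poly_fun n" by simp
    qed
    have dQ': "\<forall>x. degree (Q' x) \<le> D - 1"
    proof
      fix x
      show "degree (Q' x) \<le> D - 1"
      proof (rule degree_le)
        show "\<forall>i>D - 1. coeff (Q' x) i = 0"
        proof (intro allI impI)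
          fix i assume i: "D - 1 < i"
          have c1: "coeff (Q' x) i = coeff (Q x) i - coeff (Q x) D * coeff (R x) (i - (D - d))"
            unfolding Q'_def using i False d0 by (simp add: coeff_monom_mult)
          have "i = D \<or> D < i" using i by linarith
          moreover {
            assume "i = D" then have "i - (D - d) = d" using False by simp
            then have "coeff (Q' x) i = 0" using c1 Rl \<open>i = D\<close> by simp }
          moreover {
            assume "D < i"
            then have "coeff (Q x) i = 0" using less.prems(2) by (metis coeff_eq_0 le_less_trans)
            moreover have "coeff (R x) (i - (D - d)) = 0" using \<open>D < i\<close> Rd False
              by (intro coeff_eq_0) simp
            ultimately have "coeff (Q' x) i = 0" using c1 by simp }
          ultimately show "coeff (Q' x) i = 0" by blast
        qed
      qed
    qed
    have "D - 1 < D" using False d0 by simp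
    from less.IH[OF this cQ' dQ'] show ?thesis by (simp add: m)
  qed
qed

lemma pf_mod:
  assumes "cpf n Q" "cpf n R" "\<forall>x. degree (R x) = d" "\<forall>x. coeff (R x) d = 1" "d > 0"
  shows "(\<lambda>x. coeff (Q x mod R x) j) \<in> poly_fun n"
proof -
  obtain D where "\<forall>x. degree (Q x) \<le> D" using assms(1) unfolding cpf_def by blast
  moreover have "\<forall>j. (\<lambda>x. coeff (Q x) j) \<in> poly_fun n" "\<forall>j. (\<lambda>x. coeff (R x) j) \<in> poly_fun n"
    using assms(1,2) unfolding cpf_def by blast+
  ultimately show ?thesis using pf_mod_aux[of Q n D R d j] assms(3-5) by blast
qed

definition PX :: "nat \<Rightarrow> (nat \<Rightarrow> complex) \<Rightarrow> complex poly" where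
  "PX k x = (\<Prod>i<k. [:- x i, 1:])"

fun Rk :: "complex poly \<Rightarrow> nat \<Rightarrow> nat \<Rightarrow> (nat \<Rightarrow> complex) \<Rightarrow> complex poly" where
  "Rk f0 p 0 x = f0 - [:x p:]"
| "Rk f0 p (Suc k) x = synthetic_div (Rk f0 p k x) (x k)"

fun Sk :: "complex poly \<Rightarrow> nat \<Rightarrow> nat \<Rightarrow> (nat \<Rightarrow> complex) set" where
  "Sk f0 p 0 = UNIV"
| "Sk f0 p (Suc k) = {x \<in> Sk f0 p k. poly (Rk f0 p k x) (x k) = 0}"

definition agree :: "nat set \<Rightarrow> (nat \<Rightarrow> complex) \<Rightarrow> (nat \<Rightarrow> complex) \<Rightarrow> bool" where
  "agree I x y \<longleftrightarrow> (\<forall>i\<in>I. x i = y i)"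

definition CondE :: "complex poly \<Rightarrow> nat \<Rightarrow> ((nat \<Rightarrow> complex) \<Rightarrow> complex) \<Rightarrow> nat \<Rightarrow> (nat \<Rightarrow> complex) \<Rightarrow> bool" where
  "CondE f0 p G k x \<longleftrightarrow> (\<forall>y \<in> Sk f0 p p. agree (insert p {..<k}) x y \<longrightarrow> G y = 0)"

lemma PX_nz: "PX k x \<noteq> 0"
  unfolding PX_def by (simp add: prod_zero_iff)

lemma PX_Suc: "PX (Suc k) x = PX k x * [:- x k, 1:]"
  unfolding PX_def by simp

lemma cpf_constp: "cpf n (\<lambda>x. P0)"
proof -
  have "(\<lambda>x. coeff P0 j) \<in> poly_fun n" for j by (rule pf_const)
  then show ?thesis unfolding cpf_def by blast
qed

lemma cpf_diff: "cpf n P \<Longrightarrow> cpf n Q \<Longrightarrow> cpf n (\<lambda>x. P x - Q x)"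
proof -
  assume "cpf n P" "cpf n Q"
  then have "cpf n (\<lambda>x. P x + [:-1:] * Q x)" by (intro cpf_add cpf_mult cpf_const)
  moreover have "(\<lambda>x. P x + [:-1:] * Q x) = (\<lambda>x. P x - Q x)"
    by (rule ext) (simp add: poly_eq_iff)
  ultimately show ?thesis by simp
qed

lemma coeff_synth_rec: fixes P :: "complex poly" shows "coeff (synthetic_div P c) m = coeff P (Suc m) + c * coeff (synthetic_div P c) (Suc m)"
proof -
  have "coeff P (Suc m) = coeff ([:-c, 1:] * synthetic_div P c + [:poly P c:]) (Suc m)"
    using synthetic_div_correct'[of c P] by simp
  also have "\<dots> = - c * coeff (synthetic_div P c) (Suc m) + coeff (synthetic_div P c) m"
    by simp
  finally show ?thesis by simp
qed

lemma cpf_synth: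
  assumes P: "cpf n P" and c: "c \<in> poly_fun n"
  shows "cpf n (\<lambda>x. synthetic_div (P x) (c x))"
proof -
  obtain D where D: "\<forall>x. degree (P x) \<le> D" using P unfolding cpf_def by blast
  have Pc: "\<forall>j. (\<lambda>x. coeff (P x) j) \<in> poly_fun n" using P unfolding cpf_def by blast
  have dS: "degree (synthetic_div (P x) (c x)) \<le> D" for x
    using D by (simp add: degree_synthetic_div) (meson diff_le_self le_trans)
  have main: "\<forall>m. D - m = i \<longrightarrow> (\<lambda>x. coeff (synthetic_div (P x) (c x)) m) \<in> poly_fun n" for i
  proof (induction i)
    case 0
    show ?case
    proof (intro allI impI)
      fix m assume "D - m = 0"
      then have "D \<le> m" by simp
      have "(\<lambda>x. coeff (synthetic_div (P x) (c x)) m) = (\<lambda>x. 0)"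
      proof (rule ext)
        fix x
        have "degree (synthetic_div (P x) (c x)) < m \<or> synthetic_div (P x) (c x) = 0"
          using D[rule_format, of x] \<open>D \<le> m\<close> by (simp add: degree_synthetic_div synthetic_div_eq_0_iff) linarith
        then show "coeff (synthetic_div (P x) (c x)) m = 0" using coeff_eq_0 by fastforce
      qed
      then show "(\<lambda>x. coeff (synthetic_div (P x) (c x)) m) \<in> poly_fun n" by (simp add: pf_const)
    qed
  next
    case (Suc i)
    show ?case
    proof (intro allI impI)
      fix m assume "D - m = Suc i"
      then have "D - Suc m = i" by simp
      with Suc.IH have ih: "(\<lambda>x. coeff (synthetic_div (P x) (c x)) (Suc m)) \<in> poly_fun n" by blast
      have "(\<lambda>x. coeff (synthetic_div (P x) (c x)) m) = (\<lambda>x. coeff (P x) (Suc m) + c x * coeff (synthetic_div (P x) (c x)) (Suc m))"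
        by (rule ext) (rule coeff_synth_rec)
      moreover have "(\<lambda>x. coeff (P x) (Suc m) + c x * coeff (synthetic_div (P x) (c x)) (Suc m)) \<in> poly_fun n"
        using Pc ih c by (intro pf_add pf_mult) auto
      ultimately show "(\<lambda>x. coeff (synthetic_div (P x) (c x)) m) \<in> poly_fun n" by simp
    qed
  qed
  show ?thesis unfolding cpf_def using main dS by blast
qed

context
  fixes f0 :: "complex poly" and p :: nat
  assumes deg: "degree f0 = p" and mon: "coeff f0 p = 1" and p1: "p \<ge> 1"
begin

lemma R_deg: "degree (Rk f0 p k x) = p - k"
proof (induction k)
  case 0
  have e: "f0 - [:x p:] = f0 + [:- x p:]" by simp
  have "degree (f0 + [:- x p:]) = p" using deg p1 by (subst degree_add_eq_left) auto
  then have "degree (f0 - [:x p:]) = p" unfolding e .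
  then show ?case by simp
next
  case (Suc k) then show ?case by (simp add: degree_synthetic_div)
qed

lemma R_lead: "k \<le> p \<Longrightarrow> coeff (Rk f0 p k x) (p - k) = 1"
proof (induction k)
  case 0 then show ?case using mon p1 by (cases p) auto
next
  case (Suc k)
  define P where "P = Rk f0 p k x"
  define S where "S = synthetic_div P (x k)"
  have m: "p - k = Suc (p - Suc k)" using Suc.prems by simp
  have dS: "degree S = p - Suc k" unfolding S_def P_def using R_deg by (simp add: degree_synthetic_div)
  have "coeff S (p - Suc k) = coeff P (Suc (p - Suc k)) + x k * coeff S (Suc (p - Suc k))"
    unfolding S_def by (rule coeff_synth_rec)
  moreover have "coeff S (Suc (p - Suc k)) = 0" using dS by (intro coeff_eq_0) simp
  moreover have "coeff P (Suc (p - Suc k)) = 1" using Suc m unfolding P_def by simp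
  ultimately show ?case unfolding S_def P_def by simp
qed

lemma R_cpf: "k \<le> p \<Longrightarrow> cpf (Suc p) (Rk f0 p k)"
proof (induction k)
  case 0
  have "cpf (Suc p) (\<lambda>x. f0 - [:x p:])" by (intro cpf_diff cpf_constp cpf_var) simp
  then show ?case by simp
next
  case (Suc k)
  then have "cpf (Suc p) (\<lambda>x. synthetic_div (Rk f0 p k x) (x k))"
    by (intro cpf_synth pf_var) auto
  then show ?case by simp
qed

lemma R_indep: "agree (insert p {..<k}) x y \<Longrightarrow> Rk f0 p k x = Rk f0 p k y"
proof (induction k)
  case 0 then show ?case by (simp add: agree_def)
next
  case (Suc k)
  then have "agree (insert p {..<k}) x y" "x k = y k" by (auto simp: agree_def)
  with Suc.IH show ?case by simp
qed

lemma S_indep: "agree (insert p {..<k}) x y \<Longrightarrow> x \<in> Sk f0 p k \<longleftrightarrow> y \<in> Sk f0 p k"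
proof (induction k)
  case 0 then show ?case by simp
next
  case (Suc k)
  then have a: "agree (insert p {..<k}) x y" "x k = y k" by (auto simp: agree_def)
  with Suc.IH R_indep[OF a(1)] show ?case by simp
qed

lemma S_mono: "k \<le> m \<Longrightarrow> x \<in> Sk f0 p m \<Longrightarrow> x \<in> Sk f0 p k"
proof (induction m rule: dec_induct)
  case base then show ?case .
next
  case (step m) then show ?case by simp
qed

lemma S_fact: "x \<in> Sk f0 p k \<Longrightarrow> f0 - [:x p:] = PX k x * Rk f0 p k x"
proof (induction k)
  case 0 then show ?case by (simp add: PX_def)
next
  case (Suc k)
  then have xs: "x \<in> Sk f0 p k" and r: "poly (Rk f0 p k x) (x k) = 0" by auto
  have e1: "Rk f0 p k x = [:- x k, 1:] * Rk f0 p (Suc k) x"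
    using synthetic_div_correct'[of "x k" "Rk f0 p k x"] r by (metis Rk.simps(2) add_0_right pCons_0_0)
  have "f0 - [:x p:] = PX k x * Rk f0 p k x" using Suc.IH[OF xs] .
  also have "\<dots> = PX k x * ([:- x k, 1:] * Rk f0 p (Suc k) x)" by (simp only: e1)
  also have "\<dots> = PX (Suc k) x * Rk f0 p (Suc k) x" by (simp only: PX_Suc mult.assoc)
  finally show ?case .
qed

lemma S_full: "x \<in> Sk f0 p p \<Longrightarrow> f0 - [:x p:] = PX p x"
proof -
  assume x: "x \<in> Sk f0 p p"
  have "Rk f0 p p x = 1"
  proof (rule poly_eqI)
    fix j
    show "coeff (Rk f0 p p x) j = coeff 1 j"
    proof (cases j)
      case 0 then show ?thesis using R_lead[of p x] by simp
    next
      case (Suc j') then show ?thesis using R_deg[of p x] by (simp add: coeff_eq_0)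
    qed
  qed
  then show ?thesis using S_fact[OF x] by simp
qed

lemma S_of_fact: "k \<le> p \<Longrightarrow> f0 - [:x p:] = PX k x * q \<Longrightarrow> x \<in> Sk f0 p k"
proof (induction k arbitrary: q)
  case 0 then show ?case by simp
next
  case (Suc k)
  have "f0 - [:x p:] = PX (Suc k) x * q" using Suc.prems by simp
  then have e: "f0 - [:x p:] = PX k x * ([:- x k, 1:] * q)" by (simp only: PX_Suc mult.assoc)
  have kp: "k \<le> p" using Suc.prems(1) by simp
  have xs: "x \<in> Sk f0 p k" by (rule Suc.IH[OF kp e])
  have "PX k x * Rk f0 p k x = PX k x * ([:- x k, 1:] * q)" by (rule trans[OF S_fact[OF xs, symmetric] e])
  then have "Rk f0 p k x = [:- x k, 1:] * q" using PX_nz mult_left_cancel by blast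
  then show ?case using xs by simp
qed

lemma cond_split:
  assumes k: "k < p" and x: "x \<in> Sk f0 p k"
  shows "CondE f0 p G k x \<longleftrightarrow> (\<forall>t. poly (Rk f0 p k x) t = 0 \<longrightarrow> CondE f0 p G (Suc k) (x(k:=t)))"
proof
  assume c: "CondE f0 p G k x"
  show "\<forall>t. poly (Rk f0 p k x) t = 0 \<longrightarrow> CondE f0 p G (Suc k) (x(k:=t))"
  proof (intro allI impI)
    fix t assume "poly (Rk f0 p k x) t = 0"
    show "CondE f0 p G (Suc k) (x(k:=t))"
      unfolding CondE_def
    proof (intro ballI impI)
      fix y assume y: "y \<in> Sk f0 p p" and a: "agree (insert p {..<Suc k}) (x(k := t)) y"
      have "agree (insert p {..<k}) x y" unfolding agree_def
      proof
        fix i assume i: "i \<in> insert p {..<k}"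
        then have "i \<in> insert p {..<Suc k}" "i \<noteq> k" using k by auto
        then show "x i = y i" using a unfolding agree_def by (metis fun_upd_other)
      qed
      then show "G y = 0" using c y unfolding CondE_def by blast
    qed
  qed
next
  assume r: "\<forall>t. poly (Rk f0 p k x) t = 0 \<longrightarrow> CondE f0 p G (Suc k) (x(k:=t))"
  show "CondE f0 p G k x"
    unfolding CondE_def
  proof (intro ballI impI)
    fix y assume y: "y \<in> Sk f0 p p" and a: "agree (insert p {..<k}) x y"
    have "y \<in> Sk f0 p (Suc k)" using S_mono[of "Suc k" p y] y k by simp
    then have "poly (Rk f0 p k y) (y k) = 0" by simp
    moreover have "Rk f0 p k y = Rk f0 p k x" using R_indep a unfolding agree_def by (metis)
    ultimately have "CondE f0 p G (Suc k) (x(k := y k))" using r by simp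
    moreover have "agree (insert p {..<Suc k}) (x(k := y k)) y" using a unfolding agree_def by auto
    ultimately show "G y = 0" using y unfolding CondE_def by blast
  qed
qed

end

lemma agree_refl: "agree I x x" unfolding agree_def by simp

lemma infinite_big: "infinite {t::complex. M < norm t}"
proof -
  define N where "N = nat \<lceil>M\<rceil> + 1"
  have inj: "inj (\<lambda>n::nat. (of_nat (n + N) :: complex))" by (rule injI) simp
  have sub: "range (\<lambda>n::nat. (of_nat (n + N) :: complex)) \<subseteq> {t::complex. M < norm t}"
  proof
    fix t assume "t \<in> range (\<lambda>n::nat. (of_nat (n + N) :: complex))"
    then obtain n where t: "t = of_nat (n + N)" by blast
    have "M < real N" unfolding N_def by linarith
    also have "\<dots> \<le> real (n + N)" by simp
    finally show "t \<in> {t. M < norm t}" using t by (simp del: of_nat_add)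
  qed
  show ?thesis using range_inj_infinite[OF inj] infinite_super[OF sub] by blast
qed

context
  fixes f0 :: "complex poly" and p :: nat
  assumes deg: "degree f0 = p" and mon: "coeff f0 p = 1" and p1: "p \<ge> 1"
begin

definition EK :: "((nat \<Rightarrow> complex) \<Rightarrow> complex) \<Rightarrow> nat \<Rightarrow> bool" where
  "EK G k \<longleftrightarrow> (\<exists>Ns. finite Ns \<and> (\<forall>N\<in>Ns. N \<in> poly_fun (Suc p) \<and> (\<forall>x y. agree (insert p {..<k}) x y \<longrightarrow> N x = N y))
       \<and> (\<forall>x \<in> Sk f0 p k. CondE f0 p G k x \<longleftrightarrow> (\<forall>N\<in>Ns. N x = 0)))"

lemma elim_base:
  assumes G: "G \<in> poly_fun (Suc p)"
  shows "EK G p"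
  unfolding EK_def
proof (intro exI[of _ "{G}"] conjI)
  show "finite {G}" by simp
  have ind: "G x = G y" if "agree (insert p {..<p}) x y" for x y
  proof (rule pf_indep[OF G])
    fix i assume "i < Suc p"
    then have "i = p \<or> i < p" by auto
    then show "x i = y i" using that unfolding agree_def by auto
  qed
  show "\<forall>N\<in>{G}. N \<in> poly_fun (Suc p) \<and> (\<forall>x y. agree (insert p {..<p}) x y \<longrightarrow> N x = N y)"
    using G ind by auto
  show "\<forall>x\<in>Sk f0 p p. CondE f0 p G p x \<longleftrightarrow> (\<forall>N\<in>{G}. N x = 0)"
  proof (intro ballI)
    fix x assume x: "x \<in> Sk f0 p p"
    show "CondE f0 p G p x \<longleftrightarrow> (\<forall>N\<in>{G}. N x = 0)"
      unfolding CondE_def using x ind[of x] agree_refl[of _ x] by auto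
  qed
qed

lemma elim_step:
  assumes k: "k < p" and IH: "EK G (Suc k)"
  shows "EK G k"
proof -
  obtain Ns' where fin: "finite Ns'"
    and NsP: "\<forall>N\<in>Ns'. N \<in> poly_fun (Suc p) \<and> (\<forall>x y. agree (insert p {..<Suc k}) x y \<longrightarrow> N x = N y)"
    and NsC: "\<forall>x \<in> Sk f0 p (Suc k). CondE f0 p G (Suc k) x \<longleftrightarrow> (\<forall>N\<in>Ns'. N x = 0)"
    using IH unfolding EK_def by blast
  define proj where "proj x = (\<lambda>i. if i \<in> insert p {..<k} then x i else 0)" for x :: "nat \<Rightarrow> complex"
  have "\<forall>N\<in>Ns'. \<exists>Q. cpf (Suc p) Q \<and> (\<forall>x t. N (x(k:=t)) = poly (Q x) t)"
    using NsP pf_rep by blast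
  then have "\<exists>QQ. \<forall>N\<in>Ns'. cpf (Suc p) (QQ N) \<and> (\<forall>x t. N (x(k:=t)) = poly (QQ N x) t)"
    by (rule bchoice)
  then obtain QQ where QQ: "\<forall>N\<in>Ns'. cpf (Suc p) (QQ N) \<and> (\<forall>x t. N (x(k:=t)) = poly (QQ N x) t)"
    by blast
  define Q where "Q N x = QQ N (proj x)" for N x
  have projpf: "(\<lambda>x. proj x i) \<in> poly_fun (Suc p)" if "i < Suc p" for i
    unfolding proj_def using that by (cases "i \<in> insert p {..<k}") (simp_all add: pf_var pf_const)
  have Qc: "cpf (Suc p) (Q N)" if N: "N \<in> Ns'" for N
  proof -
    have c: "cpf (Suc p) (QQ N)" using QQ N by blast
    then obtain D where D: "\<forall>x. degree (QQ N x) \<le> D" unfolding cpf_def by blast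
    have "(\<lambda>x. coeff (QQ N (proj x)) j) \<in> poly_fun (Suc p)" for j
    proof -
      have cj: "(\<lambda>y. coeff (QQ N y) j) \<in> poly_fun (Suc p)" using c unfolding cpf_def by blast
      have "(\<lambda>x. (\<lambda>y. coeff (QQ N y) j) (proj x)) \<in> poly_fun (Suc p)" by (rule pf_subst[OF cj projpf])
      then show ?thesis by simp
    qed
    then show ?thesis unfolding cpf_def Q_def using D by blast
  qed
  have Qrep: "N (x(k:=t)) = poly (Q N x) t" if N: "N \<in> Ns'" for N x t
  proof -
    have "agree (insert p {..<Suc k}) (x(k:=t)) ((proj x)(k:=t))"
      unfolding agree_def proj_def by auto
    then have "N (x(k:=t)) = N ((proj x)(k:=t))" using NsP N by simp
    also have "\<dots> = poly (Q N x) t" using QQ N unfolding Q_def by blast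
    finally show ?thesis .
  qed
  have Qind: "Q N x = Q N y" if "agree (insert p {..<k}) x y" for N x y
  proof -
    have "proj x = proj y" using that unfolding proj_def agree_def by auto
    then show ?thesis unfolding Q_def by simp
  qed
  define d where "d = p - k"
  have d0: "d > 0" using k unfolding d_def by simp
  define M where "M N j x = coeff ((Q N x)^d mod Rk f0 p k x) j" for N j x
  define Ns where "Ns = (\<lambda>(N,j). M N j) ` (Ns' \<times> {..<d})"
  have Rdeg: "\<forall>x. degree (Rk f0 p k x) = d" using R_deg[OF deg mon p1] unfolding d_def by blast
  have Rlead: "\<forall>x. coeff (Rk f0 p k x) d = 1" using R_lead[OF deg mon p1] k unfolding d_def by simp
  have Rc: "cpf (Suc p) (Rk f0 p k)" using R_cpf[OF deg mon p1] k by simp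
  show ?thesis
    unfolding EK_def
  proof (intro exI[of _ Ns] conjI)
    show "finite Ns" unfolding Ns_def using fin by simp
    show "\<forall>N\<in>Ns. N \<in> poly_fun (Suc p) \<and> (\<forall>x y. agree (insert p {..<k}) x y \<longrightarrow> N x = N y)"
    proof
      fix N' assume "N' \<in> Ns"
      then obtain N j where N: "N \<in> Ns'" and N': "N' = M N j" unfolding Ns_def by auto
      have "M N j \<in> poly_fun (Suc p)"
        unfolding M_def by (rule pf_mod[OF cpf_pow[OF Qc[OF N]] Rc Rdeg Rlead d0])
      moreover have "M N j x = M N j y" if "agree (insert p {..<k}) x y" for x y
        unfolding M_def using Qind[OF that] R_indep[OF deg mon p1 that] by simp
      ultimately show "N' \<in> poly_fun (Suc p) \<and> (\<forall>x y. agree (insert p {..<k}) x y \<longrightarrow> N' x = N' y)"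
        using N' by blast
    qed
    show "\<forall>x\<in>Sk f0 p k. CondE f0 p G k x \<longleftrightarrow> (\<forall>N\<in>Ns. N x = 0)"
    proof
      fix x assume x: "x \<in> Sk f0 p k"
      have Rnz: "Rk f0 p k x \<noteq> 0" using Rlead by (metis coeff_0 zero_neq_one)
      have "CondE f0 p G k x \<longleftrightarrow> (\<forall>t. poly (Rk f0 p k x) t = 0 \<longrightarrow> CondE f0 p G (Suc k) (x(k:=t)))"
        by (rule cond_split[OF deg mon p1 k x])
      also have "\<dots> \<longleftrightarrow> (\<forall>t. poly (Rk f0 p k x) t = 0 \<longrightarrow> (\<forall>N\<in>Ns'. poly (Q N x) t = 0))"
      proof -
        have "CondE f0 p G (Suc k) (x(k:=t)) \<longleftrightarrow> (\<forall>N\<in>Ns'. poly (Q N x) t = 0)"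
          if t: "poly (Rk f0 p k x) t = 0" for t
        proof -
          have ag: "agree (insert p {..<k}) x (x(k:=t))" unfolding agree_def using k by auto
          have "x(k:=t) \<in> Sk f0 p k" using S_indep[OF deg mon p1 ag] x by simp
          moreover have "poly (Rk f0 p k (x(k:=t))) ((x(k:=t)) k) = 0"
            using R_indep[OF deg mon p1 ag] t by simp
          ultimately have "x(k:=t) \<in> Sk f0 p (Suc k)" by simp
          then have "CondE f0 p G (Suc k) (x(k:=t)) \<longleftrightarrow> (\<forall>N\<in>Ns'. N (x(k:=t)) = 0)"
            using NsC by blast
          then show ?thesis using Qrep by simp
        qed
        then show ?thesis by blast
      qed
      also have "\<dots> \<longleftrightarrow> (\<forall>N\<in>Ns'. \<forall>t. poly (Rk f0 p k x) t = 0 \<longrightarrow> poly (Q N x) t = 0)" by blast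
      also have "\<dots> \<longleftrightarrow> (\<forall>N\<in>Ns'. Rk f0 p k x dvd (Q N x)^d)"
      proof -
        have "(\<forall>t. poly (Rk f0 p k x) t = 0 \<longrightarrow> poly (Q N x) t = 0) \<longleftrightarrow> Rk f0 p k x dvd (Q N x)^d" for N
          using nullstellensatz_univariate[of "Rk f0 p k x" "Q N x"] Rnz Rdeg by simp
        then show ?thesis by blast
      qed
      also have "\<dots> \<longleftrightarrow> (\<forall>N\<in>Ns'. (Q N x)^d mod Rk f0 p k x = 0)" by (simp add: dvd_eq_mod_eq_0)
      also have "\<dots> \<longleftrightarrow> (\<forall>N\<in>Ns'. \<forall>j<d. M N j x = 0)"
      proof -
        have "(Q N x)^d mod Rk f0 p k x = 0 \<longleftrightarrow> (\<forall>j<d. M N j x = 0)" for N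
        proof
          assume "(Q N x)^d mod Rk f0 p k x = 0" then show "\<forall>j<d. M N j x = 0" unfolding M_def by simp
        next
          assume a: "\<forall>j<d. M N j x = 0"
          show "(Q N x)^d mod Rk f0 p k x = 0"
          proof (rule poly_eqI)
            fix j
            show "coeff ((Q N x)^d mod Rk f0 p k x) j = coeff 0 j"
            proof (cases "j < d")
              case True then show ?thesis using a unfolding M_def by simp
            next
              case False
              have "(Q N x)^d mod Rk f0 p k x = 0 \<or> degree ((Q N x)^d mod Rk f0 p k x) < d"
                using degree_mod_less[OF Rnz, of "(Q N x)^d"] Rdeg by simp
              then show ?thesis using False by (auto intro: coeff_eq_0)
            qed
          qed
        qed
        then show ?thesis by blast
      qed
      also have "\<dots> \<longleftrightarrow> (\<forall>N\<in>Ns. N x = 0)" unfolding Ns_def by auto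
      finally show "CondE f0 p G k x \<longleftrightarrow> (\<forall>N\<in>Ns. N x = 0)" .
    qed
  qed
qed

lemma elim_all:
  assumes G: "G \<in> poly_fun (Suc p)"
  shows "k \<le> p \<Longrightarrow> EK G k"
proof -
  have "\<forall>k. p - k = i \<and> k \<le> p \<longrightarrow> EK G k" for i
  proof (induction i)
    case 0 then show ?case using elim_base[OF G] by auto
  next
    case (Suc i)
    show ?case
    proof (intro allI impI)
      fix k assume a: "p - k = Suc i \<and> k \<le> p"
      then have "k < p" "p - Suc k = i" "Suc k \<le> p" by auto
      then show "EK G k" using Suc.IH elim_step by blast
    qed
  qed
  then show "k \<le> p \<Longrightarrow> EK G k" by blast
qed

lemma elim_final:
  assumes G: "G \<in> poly_fun (Suc p)" and H: "\<forall>y\<in>Sk f0 p p. M < norm (y p) \<longrightarrow> G y = 0"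
  shows "\<forall>y\<in>Sk f0 p p. G y = 0"
proof -
  obtain Ns where NsP: "\<forall>N\<in>Ns. N \<in> poly_fun (Suc p) \<and> (\<forall>x y. agree (insert p {..<0}) x y \<longrightarrow> N x = N y)"
    and C: "\<forall>x \<in> Sk f0 p 0. CondE f0 p G 0 x \<longleftrightarrow> (\<forall>N\<in>Ns. N x = 0)"
    using elim_all[OF G, of 0] unfolding EK_def by blast
  have large: "N x = 0" if "M < norm (x p)" "N \<in> Ns" for x N
  proof -
    have "CondE f0 p G 0 x" unfolding CondE_def
    proof (intro ballI impI)
      fix y assume y: "y \<in> Sk f0 p p" "agree (insert p {..<0}) x y"
      then have "y p = x p" unfolding agree_def by simp
      then show "G y = 0" using H y(1) that(1) by simp
    qed
    then show ?thesis using C that(2) by simp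
  qed
  have zero: "N x = 0" if N: "N \<in> Ns" for N x
  proof -
    obtain Q where Q: "\<forall>x t. N (x(p:=t)) = poly (Q x) t" using pf_rep NsP N by blast
    define z where "z = (\<lambda>_::nat. 0::complex)"
    have "{t::complex. M < norm t} \<subseteq> {t. poly (Q z) t = 0}"
    proof
      fix t :: complex assume "t \<in> {t. M < norm t}"
      then have "N (z(p:=t)) = 0" using large[OF _ N, of "z(p:=t)"] by simp
      then show "t \<in> {t. poly (Q z) t = 0}" using Q by simp
    qed
    then have "Q z = 0" using infinite_big[of M] poly_roots_finite[of "Q z"] finite_subset by blast
    moreover have "N x = N (z(p := x p))"
    proof -
      have "agree (insert p {..<0}) x (z(p := x p))" unfolding agree_def by simp
      then show ?thesis using NsP N by simp
    qed
    ultimately show ?thesis using Q by simp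
  qed
  show ?thesis
  proof
    fix y assume y: "y \<in> Sk f0 p p"
    have "CondE f0 p G 0 y" using C zero by simp
    then show "G y = 0" using y agree_refl unfolding CondE_def by blast
  qed
qed

end

lemma const_prod: "finite B \<Longrightarrow> (\<Prod>i\<in>B. [:f i:]) = [:\<Prod>i\<in>B. f i:]"
  by (induction B rule: finite_induct) (simp_all add: mult.commute)

lemma coeff_PX: "coeff (PX n x) j = (\<Sum>B\<in>Pow {..<n}. if card ({..<n} - B) = j then (\<Prod>i\<in>B. - x i) else 0)"
proof -
  have e: "[:- x i, 1:] = [:- x i:] + [:0, 1:]" for i by simp
  have "PX n x = (\<Prod>i<n. [:- x i:] + [:0, 1:])" unfolding PX_def by (simp only: e)
  also have "\<dots> = (\<Sum>B\<in>Pow {..<n}. (\<Prod>i\<in>B. [:- x i:]) * (\<Prod>i\<in>{..<n} - B. [:0, 1:]))"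
    by (rule prod_add) simp
  also have "\<dots> = (\<Sum>B\<in>Pow {..<n}. monom (\<Prod>i\<in>B. - x i) (card ({..<n} - B)))"
  proof (rule sum.cong)
    fix B assume "B \<in> Pow {..<n}"
    then have "B \<subseteq> {..<n}" by simp
    then have "finite B" by (rule finite_subset) simp
    then show "(\<Prod>i\<in>B. [:- x i:]) * (\<Prod>i\<in>{..<n} - B. [:0, 1:]) = monom (\<Prod>i\<in>B. - x i) (card ({..<n} - B))"
      by (simp add: const_prod monom_altdef)
  qed simp
  finally show ?thesis by (simp add: coeff_sum coeff_monom)
qed

lemma vieta: "k \<le> n \<Longrightarrow> coeff (PX n x) (n - k) = (-1)^k * esym n k x"
proof -
  assume k: "k \<le> n"
  have "coeff (PX n x) (n - k) = (\<Sum>B\<in>Pow {..<n}. if card B = k then (\<Prod>i\<in>B. - x i) else 0)"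
  proof -
    have "card ({..<n} - B) = n - k \<longleftrightarrow> card B = k" if "B \<in> Pow {..<n}" for B
    proof -
      have Bs: "B \<subseteq> {..<n}" using that by simp
      then have fB: "finite B" by (rule finite_subset) simp
      have "card ({..<n} - B) = n - card B" using card_Diff_subset[OF fB Bs] by simp
      moreover have "card B \<le> n" using card_mono[OF _ Bs] by simp
      ultimately have "card ({..<n} - B) = n - card B" "card B \<le> n" by auto
      then show ?thesis using k by auto
    qed
    then show ?thesis unfolding coeff_PX by (intro sum.cong) auto
  qed
  also have "\<dots> = (\<Sum>B\<in>{B \<in> Pow {..<n}. card B = k}. \<Prod>i\<in>B. - x i)"
    by (rule sum.inter_filter[symmetric]) simp
  also have "\<dots> = (\<Sum>B\<in>{B \<in> Pow {..<n}. card B = k}. (-1)^k * (\<Prod>i\<in>B. x i))"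
    by (intro sum.cong) (auto simp: prod_uminus)
  also have "\<dots> = (-1)^k * esym n k x"
    unfolding esym_def by (simp add: sum_distrib_left Pow_def)
  finally show ?thesis .
qed

lemma esym_0: "esym n 0 x = 1"
proof -
  have "{S. S \<subseteq> {..<n} \<and> card S = 0} = {{}}"
  proof
    show "{S. S \<subseteq> {..<n} \<and> card S = 0} \<subseteq> {{}}"
    proof
      fix S assume "S \<in> {S. S \<subseteq> {..<n} \<and> card S = 0}"
      then have "S \<subseteq> {..<n}" "card S = 0" by auto
      moreover have "finite S" using calculation(1) by (rule finite_subset) simp
      ultimately show "S \<in> {{}}" by simp
    qed
  qed simp
  then show ?thesis unfolding esym_def by simp
qed

lemma PX_high: "n < j \<Longrightarrow> coeff (PX n x) j = 0"
proof -
  assume j: "n < j"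
  have "card ({..<n} - B) \<noteq> j" for B
    using card_mono[of "{..<n}" "{..<n} - B"] j by auto
  then show ?thesis unfolding coeff_PX by simp
qed

lemma PX_lead: "coeff (PX n x) n = 1"
  using vieta[of 0 n x] esym_0 by simp

lemma PX_deg: "degree (PX n x) = n"
proof (rule antisym)
  show "degree (PX n x) \<le> n" by (rule degree_le) (simp add: PX_high)
  show "n \<le> degree (PX n x)" using PX_lead by (metis le_degree zero_neq_one)
qed

lemma C_iff:
  assumes p1: "p \<ge> 1"
  shows "x \<in> elem_sym_curve p c \<longleftrightarrow> x \<in> aspace p \<and> (\<exists>m. PX p x = PX p c - [:m:])"
proof
  assume x: "x \<in> elem_sym_curve p c"
  then have xa: "x \<in> aspace p" and e: "\<forall>k\<in>{1..p-1}. esym p k x = esym p k c"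
    unfolding elem_sym_curve_def by auto
  define m where "m = coeff (PX p c) 0 - coeff (PX p x) 0"
  have "PX p x = PX p c - [:m:]"
  proof (rule poly_eqI)
    fix j
    show "coeff (PX p x) j = coeff (PX p c - [:m:]) j"
    proof (cases "j = 0")
      case True then show ?thesis unfolding m_def by simp
    next
      case False
      then have cm: "coeff (PX p c - [:m:]) j = coeff (PX p c) j" by (cases j) auto
      consider "j < p" | "j = p" | "p < j" by linarith
      then show ?thesis
      proof cases
        case 1
        then have "p - j \<in> {1..p-1}" "p - (p - j) = j" "p - j \<le> p" using False by auto
        then show ?thesis using vieta[of "p - j" p x] vieta[of "p - j" p c] e cm by metis
      next
        case 2 then show ?thesis using cm PX_lead by simp
      next
        case 3 then show ?thesis using cm PX_high by simp
      qed
    qed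
  qed
  then show "x \<in> aspace p \<and> (\<exists>m. PX p x = PX p c - [:m:])" using xa by blast
next
  assume "x \<in> aspace p \<and> (\<exists>m. PX p x = PX p c - [:m:])"
  then obtain m where xa: "x \<in> aspace p" and e: "PX p x = PX p c - [:m:]" by blast
  have "esym p k x = esym p k c" if k: "k \<in> {1..p-1}" for k
  proof -
    have "p - k \<noteq> 0" "k \<le> p" using k by auto
    then have "coeff (PX p x) (p - k) = coeff (PX p c) (p - k)"
      unfolding e by (cases "p - k") auto
    then have "(-1)^k * esym p k x = (-1)^k * esym p k c"
      using vieta[of k p x] vieta[of k p c] \<open>k \<le> p\<close> by simp
    then show ?thesis by simp
  qed
  then show "x \<in> elem_sym_curve p c" unfolding elem_sym_curve_def using xa by blast
qed

lemma esym_pf: "(\<lambda>x. esym n k x) \<in> poly_fun n"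
  unfolding esym_def
proof (rule pf_sum)
  show "finite {S. S \<subseteq> {..<n} \<and> card S = k}" by simp
  fix S assume "S \<in> {S. S \<subseteq> {..<n} \<and> card S = k}"
  then have S: "S \<subseteq> {..<n}" by simp
  then have S2: "finite S" by (rule finite_subset) simp
  have "(\<lambda>x. \<Prod>i\<in>S. x i) \<in> poly_fun n" using S S2 by (intro pf_prod) (auto intro: pf_var)
  then show "(\<lambda>x. prod x S) \<in> poly_fun n" by simp
qed

lemma C_closed: "zariski_closed p (elem_sym_curve p c)"
  unfolding zariski_closed_def
proof (intro exI conjI)
  let ?F = "(\<lambda>k x. esym p k x - esym p k c) ` {1..p-1}"
  show "?F \<subseteq> poly_fun p" using esym_pf by (auto intro!: pf_diff pf_const)
  show "elem_sym_curve p c = {x \<in> aspace p. \<forall>f\<in>?F. f x = 0}"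
    unfolding elem_sym_curve_def by auto
qed

lemma closed_union:
  assumes "zariski_closed n A" "zariski_closed n B"
  shows "zariski_closed n (A \<union> B)"
proof -
  obtain F where F: "F \<subseteq> poly_fun n" "A = {x \<in> aspace n. \<forall>f\<in>F. f x = 0}"
    using assms(1) unfolding zariski_closed_def by blast
  obtain G where G: "G \<subseteq> poly_fun n" "B = {x \<in> aspace n. \<forall>f\<in>G. f x = 0}"
    using assms(2) unfolding zariski_closed_def by blast
  let ?H = "(\<lambda>(f, g) x. f x * g x) ` (F \<times> G)"
  have "?H \<subseteq> poly_fun n" using F G by (auto intro: pf_mult)
  moreover have "A \<union> B = {x \<in> aspace n. \<forall>h\<in>?H. h x = 0}"
  proof
    show "A \<union> B \<subseteq> {x \<in> aspace n. \<forall>h\<in>?H. h x = 0}" using F G by auto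
    show "{x \<in> aspace n. \<forall>h\<in>?H. h x = 0} \<subseteq> A \<union> B"
    proof
      fix x assume x: "x \<in> {x \<in> aspace n. \<forall>h\<in>?H. h x = 0}"
      show "x \<in> A \<union> B"
      proof (rule ccontr)
        assume "x \<notin> A \<union> B"
        then obtain f g where fg: "f \<in> F" "f x \<noteq> 0" "g \<in> G" "g x \<noteq> 0" using F G x by auto
        have hH: "(\<lambda>x. f x * g x) \<in> ?H"
          by (rule rev_image_eqI[of "(f, g)"]) (use fg in simp_all)
        have "\<forall>h\<in>?H. h x = 0" using x by simp
        from bspec[OF this hH] have "f x * g x = 0" by simp
        then show False using fg by simp
      qed
    qed
  qed
  ultimately show ?thesis unfolding zariski_closed_def by blast
qed

lemma closed_inter:
  assumes "zariski_closed n A" "zariski_closed n B"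
  shows "zariski_closed n (A \<inter> B)"
proof -
  obtain F where F: "F \<subseteq> poly_fun n" "A = {x \<in> aspace n. \<forall>f\<in>F. f x = 0}"
    using assms(1) unfolding zariski_closed_def by blast
  obtain G where G: "G \<subseteq> poly_fun n" "B = {x \<in> aspace n. \<forall>f\<in>G. f x = 0}"
    using assms(2) unfolding zariski_closed_def by blast
  have "A \<inter> B = {x \<in> aspace n. \<forall>f\<in>F \<union> G. f x = 0}" using F G by auto
  then show ?thesis using F G unfolding zariski_closed_def by blast
qed

lemma closed_empty: "zariski_closed n {}"
  unfolding zariski_closed_def
  by (rule exI[of _ "{\<lambda>x. 1}"]) (auto intro: pf_const)

lemma closed_Union: "finite I \<Longrightarrow> (\<And>i. i \<in> I \<Longrightarrow> zariski_closed n (\<Gamma> i)) \<Longrightarrow> zariski_closed n (\<Union>(\<Gamma> ` I))"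
proof (induction I rule: finite_induct)
  case empty then show ?case by (simp add: closed_empty)
next
  case (insert a I) then show ?case by (simp add: closed_union)
qed

lemma irr_cover:
  assumes Z: "zariski_irreducible n Z" and fin: "finite I"
    and cl: "\<And>i. i \<in> I \<Longrightarrow> zariski_closed n (\<Gamma> i)" and sub: "Z \<subseteq> \<Union>(\<Gamma> ` I)"
  shows "\<exists>i\<in>I. Z \<subseteq> \<Gamma> i"
  using fin cl sub
proof (induction I rule: finite_induct)
  case empty then show ?case using Z unfolding zariski_irreducible_def by auto
next
  case (insert a I)
  have Zc: "zariski_closed n Z" using Z unfolding zariski_irreducible_def by blast
  have c1: "zariski_closed n (Z \<inter> \<Gamma> a)" using Zc insert.prems by (intro closed_inter) auto
  have c2: "zariski_closed n (Z \<inter> \<Union>(\<Gamma> ` I))" using Zc insert.prems insert.hyps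
    by (intro closed_inter closed_Union) auto
  have "Z = (Z \<inter> \<Gamma> a) \<union> (Z \<inter> \<Union>(\<Gamma> ` I))" using insert.prems by auto
  then have "Z = Z \<inter> \<Gamma> a \<or> Z = Z \<inter> \<Union>(\<Gamma> ` I)"
    using Z c1 c2 unfolding zariski_irreducible_def by blast
  then show ?case
  proof
    assume "Z = Z \<inter> \<Gamma> a" then show ?thesis by blast
  next
    assume "Z = Z \<inter> \<Union>(\<Gamma> ` I)"
    then have "Z \<subseteq> \<Union>(\<Gamma> ` I)" by blast
    then show ?thesis using insert.IH insert.prems by blast
  qed
qed

lemma poly_tail_bound:
  fixes f0 :: "complex poly"
  assumes deg: "degree f0 = p" and mon: "coeff f0 p = 1" and t1: "1 \<le> norm t"
  shows "norm (poly f0 t - t^p) \<le> (\<Sum>j<p. norm (coeff f0 j)) * norm t ^ (p - 1)"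
proof -
  have "poly f0 t = (\<Sum>j\<le>p. coeff f0 j * t ^ j)" using poly_altdef[of f0 t] deg by simp
  also have "\<dots> = (\<Sum>j<p. coeff f0 j * t ^ j) + t ^ p" using mon by (simp add: lessThan_Suc_atMost[symmetric])
  finally have e: "poly f0 t - t^p = (\<Sum>j<p. coeff f0 j * t ^ j)" by simp
  have "norm (\<Sum>j<p. coeff f0 j * t ^ j) \<le> (\<Sum>j<p. norm (coeff f0 j * t ^ j))" by (rule norm_sum)
  also have "\<dots> \<le> (\<Sum>j<p. norm (coeff f0 j) * norm t ^ (p - 1))"
  proof (rule sum_mono)
    fix j assume "j \<in> {..<p}"
    then have "j \<le> p - 1" by auto
    then have "norm t ^ j \<le> norm t ^ (p - 1)" using t1 by (intro power_increasing)
    then show "norm (coeff f0 j * t ^ j) \<le> norm (coeff f0 j) * norm t ^ (p - 1)"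
      by (simp add: norm_mult norm_power mult_left_mono)
  qed
  also have "\<dots> = (\<Sum>j<p. norm (coeff f0 j)) * norm t ^ (p - 1)" by (simp add: sum_distrib_right)
  finally show ?thesis using e by simp
qed

definition Bc :: "complex poly \<Rightarrow> nat \<Rightarrow> real" where "Bc f0 p = (\<Sum>j<p. norm (coeff f0 j))"
definition R0 :: "complex poly \<Rightarrow> nat \<Rightarrow> real" where "R0 f0 p = 4 * Bc f0 p + 1"
definition Kc :: "complex poly \<Rightarrow> nat \<Rightarrow> real" where "Kc f0 p = 3 * Bc f0 p + 1"
definition eps :: "complex poly \<Rightarrow> nat \<Rightarrow> complex \<Rightarrow> complex" where "eps f0 p t = (poly f0 t - t^p) / t^p"
definition gg :: "complex poly \<Rightarrow> nat \<Rightarrow> complex \<Rightarrow> complex" where "gg f0 p t = t * exp (Ln (1 + eps f0 p t) / of_nat p)"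

context
  fixes f0 :: "complex poly" and p :: nat
  assumes deg: "degree f0 = p" and mon: "coeff f0 p = 1" and p1: "p \<ge> 1"
begin


lemma Bc_nonneg: "Bc f0 p \<ge> 0" unfolding Bc_def by (simp add: sum_nonneg)

lemma eps_bound: "R0 f0 p < norm t \<Longrightarrow> norm (eps f0 p t) \<le> Bc f0 p / norm t \<and> norm (eps f0 p t) < 1/4"
proof -
  assume t: "R0 f0 p < norm t"
  have t1: "1 \<le> norm t" using t Bc_nonneg unfolding R0_def by linarith
  then have tp: "norm t > 0" by linarith
  have "norm (eps f0 p t) = norm (poly f0 t - t^p) / norm t ^ p" unfolding eps_def by (simp add: norm_divide norm_power)
  also have "\<dots> \<le> Bc f0 p * norm t ^ (p - 1) / norm t ^ p"
    using poly_tail_bound[OF deg mon t1] by (intro divide_right_mono) (simp_all add: Bc_def)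
  also have "\<dots> = Bc f0 p / norm t"
  proof -
    have "norm t ^ p = norm t ^ (p - 1) * norm t" using p1 by (metis Suc_diff_1 less_le_trans zero_less_one power_Suc2)
    then show ?thesis using tp by simp
  qed
  finally have a: "norm (eps f0 p t) \<le> Bc f0 p / norm t" .
  have "Bc f0 p / norm t < 1/4"
    using t tp Bc_nonneg unfolding R0_def by (simp add: divide_simps)
  with a show ?thesis by linarith
qed

lemma eps_holo: "eps f0 p holomorphic_on {t. R0 f0 p < norm t}"
proof -
  have "t \<noteq> 0" if "R0 f0 p < norm t" for t
  proof -
    have "norm t > 0" using that Bc_nonneg unfolding R0_def by linarith
    then show ?thesis by auto
  qed
  then show ?thesis unfolding eps_def by (intro holomorphic_intros) auto
qed

lemma notnonpos: "norm (z::complex) < 1/4 \<Longrightarrow> 1 + z \<notin> \<real>\<^sub>\<le>\<^sub>0"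
proof -
  assume z: "norm z < 1/4"
  have "\<bar>Re z\<bar> \<le> norm z" by (rule abs_Re_le_cmod)
  then have "Re (1 + z) > 0" using z by simp
  then show ?thesis by (auto simp: complex_nonpos_Reals_iff)
qed

lemma gg_holo: "gg f0 p holomorphic_on {t. R0 f0 p < norm t}"
proof -
  have "(\<lambda>t. Ln (1 + eps f0 p t)) holomorphic_on {t. R0 f0 p < norm t}"
    using eps_bound notnonpos eps_holo by (intro holomorphic_on_Ln' holomorphic_intros) auto
  then have "(\<lambda>t. Ln (1 + eps f0 p t) / of_nat p) holomorphic_on {t. R0 f0 p < norm t}"
    using p1 by (intro holomorphic_on_divide) auto
  then have "(\<lambda>t. exp (Ln (1 + eps f0 p t) / of_nat p)) holomorphic_on {t. R0 f0 p < norm t}"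
    by (rule holomorphic_on_exp')
  then have "(\<lambda>t. t * exp (Ln (1 + eps f0 p t) / of_nat p)) holomorphic_on {t. R0 f0 p < norm t}"
    by (intro holomorphic_on_mult holomorphic_on_ident)
  then show ?thesis unfolding gg_def .
qed

lemma gg_pow: "R0 f0 p < norm t \<Longrightarrow> gg f0 p t ^ p = poly f0 t"
proof -
  assume t: "R0 f0 p < norm t"
  have "norm t > 0" using t Bc_nonneg unfolding R0_def by linarith
  then have tnz: "t \<noteq> 0" by auto
  have nz: "1 + eps f0 p t \<noteq> 0" using notnonpos eps_bound[OF t] by force
  have "exp (Ln (1 + eps f0 p t) / of_nat p) ^ p = exp (of_nat p * (Ln (1 + eps f0 p t) / of_nat p))"
    by (rule exp_of_nat_mult[symmetric])
  also have "\<dots> = 1 + eps f0 p t" using p1 nz by simp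
  finally have "gg f0 p t ^ p = t^p * (1 + eps f0 p t)" unfolding gg_def by (simp add: power_mult_distrib)
  also have "\<dots> = poly f0 t" unfolding eps_def using tnz by (simp add: field_simps)
  finally show ?thesis .
qed

lemma gg_close: "R0 f0 p < norm t \<Longrightarrow> norm (gg f0 p t - t) \<le> 3 * Bc f0 p"
proof -
  assume t: "R0 f0 p < norm t"
  have tp: "norm t > 0" using t Bc_nonneg unfolding R0_def by linarith
  define L where "L = Ln (1 + eps f0 p t)"
  have e: "norm (eps f0 p t) \<le> Bc f0 p / norm t" "norm (eps f0 p t) < 1/4" using eps_bound[OF t] by auto
  have L: "norm L \<le> 2 * norm (eps f0 p t)" unfolding L_def using e(2) by (intro norm_Ln_le) simp
  have rp: "1 \<le> real p" using p1 by simp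
  have "norm L * 1 \<le> norm L * real p" by (rule mult_left_mono[OF rp norm_ge_zero])
  then have Lp: "norm (L / of_nat p) \<le> norm L" using rp by (simp add: norm_divide divide_le_eq)
  have "norm (L / of_nat p) \<le> 1/2" using Lp L e(2) by linarith
  then have ex: "norm (exp (L / of_nat p) - 1) \<le> 3/2 * norm (L / of_nat p)" by (rule norm_exp_bounds(2))
  have "gg f0 p t - t = t * (exp (L / of_nat p) - 1)" unfolding gg_def L_def by (simp add: algebra_simps)
  then have "norm (gg f0 p t - t) = norm t * norm (exp (L / of_nat p) - 1)" by (simp add: norm_mult)
  also have "\<dots> \<le> norm t * (3 * norm (eps f0 p t))"
    using ex Lp L tp by (intro mult_left_mono) auto
  also have "\<dots> \<le> norm t * (3 * (Bc f0 p / norm t))" using e(1) tp by (intro mult_left_mono) auto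
  also have "\<dots> = 3 * Bc f0 p" using tp by simp
  finally show ?thesis .
qed

end

definition RR :: "complex poly \<Rightarrow> nat \<Rightarrow> real" where "RR f0 p = R0 f0 p + 4 * Kc f0 p + 1"

context
  fixes f0 :: "complex poly" and p :: nat
  assumes deg: "degree f0 = p" and mon: "coeff f0 p = 1" and p1: "p \<ge> 1"
begin


abbreviation "U0 \<equiv> {t. R0 f0 p < norm t}"

lemma open_U0: "open U0"
  by (intro open_Collect_less continuous_intros)

lemma Kc_pos: "Kc f0 p > 0" using Bc_nonneg[OF deg mon p1] unfolding Kc_def by linarith

lemma hh_holo: "(\<lambda>t. gg f0 p t - t) holomorphic_on U0"
  using gg_holo[OF deg mon p1] by (intro holomorphic_intros)

lemma hh_bound: "R0 f0 p < norm t \<Longrightarrow> norm (gg f0 p t - t) \<le> Kc f0 p"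
  using gg_close[OF deg mon p1, of t] unfolding Kc_def by linarith

lemma deriv_small:
  assumes s: "R0 f0 p + 3 * Kc f0 p < norm s"
  shows "norm (deriv (\<lambda>t. gg f0 p t - t) s) \<le> 1/2"
proof -
  define K where "K = Kc f0 p"
  have K: "K > 0" using Kc_pos unfolding K_def .
  have sub: "cball s (2 * K) \<subseteq> U0"
  proof
    fix z assume "z \<in> cball s (2 * K)"
    then have "norm (s - z) \<le> 2 * K" by (simp add: dist_norm)
    moreover have "norm s \<le> norm z + norm (s - z)" by (metis add.commute diff_add_cancel norm_triangle_ineq)
    ultimately show "z \<in> U0" using s K unfolding K_def by simp
  qed
  have "norm ((deriv ^^ 1) (\<lambda>t. gg f0 p t - t) s) \<le> fact 1 * K / (2 * K) ^ 1"
  proof (rule Cauchy_inequality)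
    show "(\<lambda>t. gg f0 p t - t) holomorphic_on ball s (2 * K)"
      using hh_holo sub ball_subset_cball by (meson holomorphic_on_subset subset_trans)
    show "continuous_on (cball s (2 * K)) (\<lambda>t. gg f0 p t - t)"
      using hh_holo sub holomorphic_on_imp_continuous_on holomorphic_on_subset by blast
    show "0 < 2 * K" using K by simp
    fix x assume "norm (s - x) = 2 * K"
    then have "x \<in> cball s (2 * K)" by (simp add: dist_norm)
    then have "R0 f0 p < norm x" using sub by auto
    then show "norm (gg f0 p x - x) \<le> K" unfolding K_def by (rule hh_bound)
  qed
  then show ?thesis using K by simp
qed

lemma gg_inj:
  assumes w: "RR f0 p < norm w" and t1: "R0 f0 p < norm t1" "gg f0 p t1 = w"
    and t2: "R0 f0 p < norm t2" "gg f0 p t2 = w"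
  shows "t1 = t2"
proof -
  define K where "K = Kc f0 p"
  define hh where "hh t = gg f0 p t - t" for t
  have K: "K > 0" using Kc_pos unfolding K_def .
  have inU: "R0 f0 p + 3 * K < norm s" if "s \<in> cball w K" for s
  proof -
    have "norm (w - s) \<le> K" using that by (simp add: dist_norm)
    moreover have "norm w \<le> norm s + norm (w - s)" by (metis add.commute diff_add_cancel norm_triangle_ineq)
    ultimately show ?thesis using w unfolding RR_def K_def by simp
  qed
  have inU0: "s \<in> U0" if "s \<in> cball w K" for s using inU[OF that] K by simp
  have c1: "t1 \<in> cball w K" using hh_bound[OF t1(1)] t1(2) unfolding K_def by (simp add: dist_norm norm_minus_commute)
  have c2: "t2 \<in> cball w K" using hh_bound[OF t2(1)] t2(2) unfolding K_def by (simp add: dist_norm norm_minus_commute)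
  have "norm (hh t1 - hh t2) \<le> 1/2 * norm (t1 - t2)"
  proof (rule field_differentiable_bound[where S = "cball w K" and f' = "deriv hh"])
    show "convex (cball w K)" by simp
    fix z assume z: "z \<in> cball w K"
    show "(hh has_field_derivative deriv hh z) (at z within cball w K)"
      unfolding hh_def by (rule holomorphic_derivI[OF hh_holo open_U0 inU0[OF z]])
    show "norm (deriv hh z) \<le> 1/2" unfolding hh_def using deriv_small inU[OF z] unfolding K_def by blast
  qed (use c1 c2 in auto)
  moreover have "hh t1 - hh t2 = t2 - t1" unfolding hh_def using t1 t2 by simp
  ultimately have "norm (t1 - t2) \<le> 1/2 * norm (t1 - t2)" by (simp add: norm_minus_commute)
  then show ?thesis by simp
qed

lemma gg_surj:
  assumes w: "RR f0 p < norm w"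
  shows "\<exists>s. R0 f0 p < norm s \<and> norm (s - w) \<le> Kc f0 p \<and> gg f0 p s = w"
proof -
  define K where "K = Kc f0 p"
  have K: "K > 0" using Kc_pos unfolding K_def .
  have inU0: "s \<in> U0" if "s \<in> cball w K" for s
  proof -
    have "norm (w - s) \<le> K" using that by (simp add: dist_norm)
    moreover have "norm w \<le> norm s + norm (w - s)" by (metis add.commute diff_add_cancel norm_triangle_ineq)
    ultimately show ?thesis using w K unfolding RR_def K_def by simp
  qed
  have sub: "cball w K \<subseteq> U0" using inU0 by blast
  obtain s where s: "s \<in> cball w K" "w - (gg f0 p s - s) = s"
  proof (rule brouwer_ball[of K w "\<lambda>s. w - (gg f0 p s - s)"])
    show "0 < K" by (rule K)
    show "continuous_on (cball w K) (\<lambda>s. w - (gg f0 p s - s))"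
    proof -
      have "continuous_on (cball w K) (\<lambda>t. gg f0 p t - t)"
        using holomorphic_on_imp_continuous_on[OF holomorphic_on_subset[OF hh_holo sub]] .
      then show ?thesis by (rule continuous_on_diff[OF continuous_on_const])
    qed
    show "(\<lambda>s. w - (gg f0 p s - s)) \<in> cball w K \<rightarrow> cball w K"
    proof
      fix s assume "s \<in> cball w K"
      then have "R0 f0 p < norm s" using inU0 by blast
      then have "norm (gg f0 p s - s) \<le> K" unfolding K_def by (rule hh_bound)
      then show "w - (gg f0 p s - s) \<in> cball w K" by (simp add: dist_norm)
    qed
  qed blast
  have "gg f0 p s = w" using s(2) by (simp add: algebra_simps)
  moreover have "norm (s - w) \<le> K" using s(1) by (simp add: dist_norm norm_minus_commute)
  ultimately show ?thesis using inU0[OF s(1)] unfolding K_def by blast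
qed

lemma root_branch:
  "\<exists>T. T holomorphic_on {w. RR f0 p < norm w} \<and>
     (\<forall>w. RR f0 p < norm w \<longrightarrow> poly f0 (T w) = w^p \<and> norm (T w - w) \<le> Kc f0 p)"
proof -
  define U1 where "U1 = {t. R0 f0 p < norm t \<and> RR f0 p < norm (gg f0 p t)}"
  have "continuous_on U0 (gg f0 p)" using gg_holo[OF deg mon p1] holomorphic_on_imp_continuous_on by blast
  then have "open (gg f0 p -` {w. RR f0 p < norm w} \<inter> U0)"
  proof -
    have oB: "open {w::complex. RR f0 p < norm w}" by (intro open_Collect_less continuous_intros)
    show ?thesis using continuous_on_open_vimage[OF open_U0, of "gg f0 p"] \<open>continuous_on U0 (gg f0 p)\<close> oB by blast
  qed
  moreover have "gg f0 p -` {w. RR f0 p < norm w} \<inter> U0 = U1" unfolding U1_def by auto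
  ultimately have oU1: "open U1" by simp
  have hU1: "gg f0 p holomorphic_on U1" using gg_holo[OF deg mon p1] unfolding U1_def
    by (rule holomorphic_on_subset) auto
  have iU1: "inj_on (gg f0 p) U1"
    by (rule inj_onI) (use gg_inj in \<open>auto simp: U1_def\<close>)
  obtain T where T: "T holomorphic_on (gg f0 p ` U1)" "\<And>z. z \<in> U1 \<Longrightarrow> T (gg f0 p z) = z"
    using holomorphic_has_inverse[OF hU1 oU1 iU1] by metis
  have sub: "{w. RR f0 p < norm w} \<subseteq> gg f0 p ` U1"
  proof
    fix w :: complex assume "w \<in> {w. RR f0 p < norm w}"
    then have w: "RR f0 p < norm w" by simp
    obtain s where "R0 f0 p < norm s" "gg f0 p s = w" using gg_surj[OF w] by blast
    then show "w \<in> gg f0 p ` U1" unfolding U1_def using w by auto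
  qed
  have "T holomorphic_on {w. RR f0 p < norm w}" using T(1) sub by (rule holomorphic_on_subset)
  moreover have "poly f0 (T w) = w^p \<and> norm (T w - w) \<le> Kc f0 p" if w: "RR f0 p < norm w" for w :: complex
  proof -
    obtain s where s: "R0 f0 p < norm s" "norm (s - w) \<le> Kc f0 p" "gg f0 p s = w" using gg_surj[OF w] by blast
    then have "s \<in> U1" unfolding U1_def using w by auto
    then have "T w = s" using T(2) s(3) by blast
    then show ?thesis using s gg_pow[OF deg mon p1 s(1)] by simp
  qed
  ultimately show ?thesis by blast
qed

end

definition clos :: "nat \<Rightarrow> (complex \<Rightarrow> nat \<Rightarrow> complex) \<Rightarrow> complex set \<Rightarrow> (nat \<Rightarrow> complex) set" where
  "clos n \<Psi> D = {x \<in> aspace n. \<forall>g\<in>poly_fun n. (\<forall>w\<in>D. g (\<Psi> w) = 0) \<longrightarrow> g x = 0}"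

lemma clos_closed: "zariski_closed n (clos n \<Psi> D)"
  unfolding zariski_closed_def clos_def
  by (rule exI[of _ "{g \<in> poly_fun n. \<forall>w\<in>D. g (\<Psi> w) = 0}"]) auto

lemma clos_sup: "(\<And>w. w \<in> D \<Longrightarrow> \<Psi> w \<in> aspace n) \<Longrightarrow> \<Psi> ` D \<subseteq> clos n \<Psi> D"
  unfolding clos_def by auto

lemma clos_min:
  assumes A: "zariski_closed n A" and sub: "\<Psi> ` D \<subseteq> A"
  shows "clos n \<Psi> D \<subseteq> A"
proof
  fix x assume x: "x \<in> clos n \<Psi> D"
  obtain F where F: "F \<subseteq> poly_fun n" "A = {x \<in> aspace n. \<forall>f\<in>F. f x = 0}"
    using A unfolding zariski_closed_def by blast
  have "\<forall>f\<in>F. f x = 0"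
  proof
    fix f assume f: "f \<in> F"
    have "\<forall>w\<in>D. f (\<Psi> w) = 0" using sub F f by auto
    then show "f x = 0" using x f F unfolding clos_def by blast
  qed
  then show "x \<in> A" using x F unfolding clos_def by blast
qed

lemma pf_holo:
  assumes g: "g \<in> poly_fun n" and h: "\<And>i. i < n \<Longrightarrow> (\<lambda>w. \<Psi> w i) holomorphic_on D"
  shows "(\<lambda>w. g (\<Psi> w)) holomorphic_on D"
  using g
proof (induction rule: poly_fun.induct)
  case (const c) show ?case by (rule holomorphic_on_const)
next
  case (var i) then show ?case using h by simp
next
  case (add f g)
  then have "(\<lambda>w. f (\<Psi> w)) holomorphic_on D" "(\<lambda>w. g (\<Psi> w)) holomorphic_on D" by auto
  then show ?case by (rule holomorphic_on_add)
next
  case (mult f g)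
  then have "(\<lambda>w. f (\<Psi> w)) holomorphic_on D" "(\<lambda>w. g (\<Psi> w)) holomorphic_on D" by auto
  then show ?case by (rule holomorphic_on_mult)
qed

lemma prod_zero_holo:
  assumes h1: "h1 holomorphic_on D" and h2: "h2 holomorphic_on D" and oD: "open D" and cD: "connected D"
    and z: "\<And>w. w \<in> D \<Longrightarrow> h1 w * h2 w = 0" and w1: "w1 \<in> D" "h1 w1 \<noteq> 0"
  shows "\<forall>w\<in>D. h2 w = 0"
proof -
  have "continuous_on D h1" using h1 by (rule holomorphic_on_imp_continuous_on)
  then have "open (h1 -` (- {0}) \<inter> D)" using continuous_on_open_vimage[OF oD] by blast
  moreover have "w1 \<in> h1 -` (- {0}) \<inter> D" using w1 by auto
  ultimately obtain r where r: "r > 0" "ball w1 r \<subseteq> h1 -` (- {0}) \<inter> D"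
    using open_contains_ball by blast
  have zb: "h2 z = 0" if "z \<in> ball w1 r" for z
  proof -
    have "z \<in> D" "h1 z \<noteq> 0" using r(2) that by auto
    then show ?thesis using z[of z] by simp
  qed
  show ?thesis
  proof
    fix w assume w: "w \<in> D"
    show "h2 w = 0"
    proof (rule analytic_continuation[OF h2 oD cD _ w1(1) _ zb w])
      show "ball w1 r \<subseteq> D" using r(2) by auto
      show "w1 islimpt ball w1 r" using r(1) by (simp add: islimpt_ball)
    qed
  qed
qed

lemma clos_irred:
  assumes oD: "open D" and cD: "connected D" and ne: "D \<noteq> {}"
    and h: "\<And>i. i < n \<Longrightarrow> (\<lambda>w. \<Psi> w i) holomorphic_on D"
    and asp: "\<And>w. w \<in> D \<Longrightarrow> \<Psi> w \<in> aspace n"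
  shows "zariski_irreducible n (clos n \<Psi> D)"
  unfolding zariski_irreducible_def
proof (intro conjI allI impI)
  show "clos n \<Psi> D \<noteq> {}" using clos_sup[of D \<Psi> n] asp ne by blast
  show "zariski_closed n (clos n \<Psi> D)" by (rule clos_closed)
  fix A B assume A: "zariski_closed n A" and B: "zariski_closed n B" and e: "clos n \<Psi> D = A \<union> B"
  have sub: "\<Psi> ` D \<subseteq> A \<union> B" using clos_sup[of D \<Psi> n] asp e by blast
  obtain FA where FA: "FA \<subseteq> poly_fun n" "A = {x \<in> aspace n. \<forall>f\<in>FA. f x = 0}"
    using A unfolding zariski_closed_def by blast
  obtain FB where FB: "FB \<subseteq> poly_fun n" "B = {x \<in> aspace n. \<forall>f\<in>FB. f x = 0}"
    using B unfolding zariski_closed_def by blast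
  have "\<Psi> ` D \<subseteq> A \<or> \<Psi> ` D \<subseteq> B"
  proof (rule ccontr)
    assume "\<not> (\<Psi> ` D \<subseteq> A \<or> \<Psi> ` D \<subseteq> B)"
    then obtain w1 w2 where w1: "w1 \<in> D" "\<Psi> w1 \<notin> A" and w2: "w2 \<in> D" "\<Psi> w2 \<notin> B" by blast
    have "\<not> (\<forall>f\<in>FA. f (\<Psi> w1) = 0)" using w1 asp[OF w1(1)] FA(2) by simp
    then obtain fa where fa: "fa \<in> FA" "fa (\<Psi> w1) \<noteq> 0" by blast
    have "\<not> (\<forall>f\<in>FB. f (\<Psi> w2) = 0)" using w2 asp[OF w2(1)] FB(2) by simp
    then obtain fb where fb: "fb \<in> FB" "fb (\<Psi> w2) \<noteq> 0" by blast
    have "fa \<in> poly_fun n" using fa(1) FA(1) by blast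
    then have ha: "(\<lambda>w. fa (\<Psi> w)) holomorphic_on D" using h by (rule pf_holo)
    have "fb \<in> poly_fun n" using fb(1) FB(1) by blast
    then have hb: "(\<lambda>w. fb (\<Psi> w)) holomorphic_on D" using h by (rule pf_holo)
    have "fa (\<Psi> w) * fb (\<Psi> w) = 0" if w: "w \<in> D" for w
    proof -
      have "\<Psi> w \<in> A \<or> \<Psi> w \<in> B" using sub w by blast
      then have "fa (\<Psi> w) = 0 \<or> fb (\<Psi> w) = 0"
      proof
        assume "\<Psi> w \<in> A" then show ?thesis using fa(1) FA(2) by blast
      next
        assume "\<Psi> w \<in> B" then show ?thesis using fb(1) FB(2) by blast
      qed
      then show ?thesis by auto
    qed
    then have "\<forall>w\<in>D. fb (\<Psi> w) = 0" using prod_zero_holo[OF ha hb oD cD _ w1(1) fa(2)] by blast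
    then show False using w2 fb by blast
  qed
  then show "clos n \<Psi> D = A \<or> clos n \<Psi> D = B"
    using clos_min[OF A] clos_min[OF B] e by blast
qed

lemma perm_pt_aspace:
  assumes pi: "\<pi> permutes {..<n}" and x: "x \<in> aspace n"
  shows "perm_pt \<pi> x \<in> aspace n"
proof -
  have ip: "inv \<pi> permutes {..<n}" by (rule permutes_inv[OF pi])
  show ?thesis using x unfolding aspace_def perm_pt_def
    using permutes_not_in[OF ip] by auto
qed

lemma pf_perm:
  assumes pi: "\<pi> permutes {..<n}" and g: "g \<in> poly_fun n"
  shows "(\<lambda>x. g (perm_pt \<pi> x)) \<in> poly_fun n"
proof (rule pf_subst[OF g])
  fix i assume i: "i < n"
  have ip: "inv \<pi> permutes {..<n}" by (rule permutes_inv[OF pi])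
  have "inv \<pi> i < n" using permutes_in_image[OF ip] i by simp
  then show "(\<lambda>x. perm_pt \<pi> x i) \<in> poly_fun n" unfolding perm_pt_def by (simp add: pf_var)
qed

lemma clos_perm:
  assumes pi: "\<pi> permutes {..<n}" and m: "\<And>w. w \<in> D \<Longrightarrow> \<exists>w'\<in>D. perm_pt \<pi> (\<Psi> w) = \<Psi> w'"
    and x: "x \<in> clos n \<Psi> D"
  shows "perm_pt \<pi> x \<in> clos n \<Psi> D"
  unfolding clos_def
proof (intro CollectI conjI ballI impI)
  show "perm_pt \<pi> x \<in> aspace n" using perm_pt_aspace[OF pi] x unfolding clos_def by blast
  fix g assume g: "g \<in> poly_fun n" and v: "\<forall>w\<in>D. g (\<Psi> w) = 0"
  have H: "\<forall>w\<in>D. (\<lambda>y. g (perm_pt \<pi> y)) (\<Psi> w) = 0"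
  proof
    fix w assume "w \<in> D"
    then obtain w' where w': "w' \<in> D" "perm_pt \<pi> (\<Psi> w) = \<Psi> w'" using m by blast
    then show "(\<lambda>y. g (perm_pt \<pi> y)) (\<Psi> w) = 0" using v by simp
  qed
  have xc: "\<forall>g\<in>poly_fun n. (\<forall>w\<in>D. g (\<Psi> w) = 0) \<longrightarrow> g x = 0" using x unfolding clos_def by blast
  have "(\<forall>w\<in>D. (\<lambda>y. g (perm_pt \<pi> y)) (\<Psi> w) = 0) \<longrightarrow> (\<lambda>y. g (perm_pt \<pi> y)) x = 0"
    by (rule bspec[OF xc pf_perm[OF pi g]])
  from mp[OF this H] show "g (perm_pt \<pi> x) = 0" by simp
qed

definition zeta :: "nat \<Rightarrow> complex" where "zeta p = exp (\<i> * of_real (2 * pi / real p))"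

definition delta :: "nat \<Rightarrow> real" where
  "delta p = Min (insert 1 ((\<lambda>(i,j). norm (zeta p ^ i - zeta p ^ j)) ` {(i,j). i < p \<and> j < p \<and> i \<noteq> j}))"

definition R2 :: "complex poly \<Rightarrow> nat \<Rightarrow> real" where
  "R2 f0 p = max (RR f0 p) (2 * Kc f0 p / delta p) + 1"

definition Phi :: "(complex \<Rightarrow> complex) \<Rightarrow> nat \<Rightarrow> complex \<Rightarrow> nat \<Rightarrow> complex" where
  "Phi T p w = (\<lambda>i. if i < p then T (zeta p ^ i * w) else 0)"

definition cyc :: "nat \<Rightarrow> nat \<Rightarrow> nat" where "cyc p = cycle_of_list [0..<p]"

lemma zeta_pow: "zeta p ^ i = exp (\<i> * of_real (2 * pi * real i / real p))"
proof -
  have "zeta p ^ i = exp (of_nat i * (\<i> * of_real (2 * pi / real p)))"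
    unfolding zeta_def by (rule exp_of_nat_mult[symmetric])
  also have "of_nat i * (\<i> * of_real (2 * pi / real p)) = \<i> * of_real (2 * pi * real i / real p)"
    by simp
  finally show ?thesis .
qed

lemma zeta_norm: "norm (zeta p ^ i) = 1"
  unfolding zeta_pow by (rule norm_exp_i_times)

lemma zeta_p: "p \<ge> 1 \<Longrightarrow> zeta p ^ p = 1"
proof -
  assume p: "p \<ge> 1"
  have "zeta p ^ p = exp (\<i> * of_real (2 * pi))" unfolding zeta_pow using p by simp
  also have "\<dots> = exp 0"
    unfolding exp_eq by (rule exI[of _ 1]) (simp add: mult.commute)
  finally show ?thesis by simp
qed

lemma zeta_inj: assumes "i < p" "j < p" "zeta p ^ i = zeta p ^ j" shows "i = j"
proof -
  obtain n :: int where n: "\<i> * of_real (2 * pi * real i / real p) = \<i> * of_real (2 * pi * real j / real p) + (of_int (2 * n) * pi) * \<i>"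
    using assms(3) unfolding zeta_pow exp_eq by blast
  have "Im (\<i> * of_real (2 * pi * real i / real p)) = Im (\<i> * of_real (2 * pi * real j / real p) + (of_int (2 * n) * pi) * \<i>)"
    using n by simp
  then have eq: "2 * pi * real i / real p = 2 * pi * real j / real p + 2 * real_of_int n * pi" by simp
  have pp: "real p > 0" using assms(1) by simp
  have "pi * (2 * real i) = pi * (2 * (real j + real_of_int n * real p))"
    using eq pp by (simp add: field_simps)
  then have "2 * real i = 2 * (real j + real_of_int n * real p)" using pi_neq_zero by simp
  then have e: "real i = real j + real_of_int n * real p" by simp
  have "real_of_int (int i) = real_of_int (int j + n * int p)" using e by simp
  then have ie: "int i = int j + n * int p" by (rule of_int_eq_iff[THEN iffD1])
  have h1: "n * int p = int i - int j" using ie by simp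
  have h2: "\<bar>int i - int j\<bar> < int p" using assms(1,2) by arith
  have "\<bar>n\<bar> * int p < 1 * int p" using h1 h2 by (simp add: abs_mult)
  then have "\<bar>n\<bar> < 1" by (rule mult_right_less_imp_less) simp
  then have "n = 0" by simp
  then show ?thesis using e by simp
qed

lemma zeta_mod: "p \<ge> 1 \<Longrightarrow> zeta p ^ (i mod p) = zeta p ^ i"
proof -
  assume p: "p \<ge> 1"
  have "zeta p ^ i = zeta p ^ (p * (i div p) + i mod p)" by simp
  also have "\<dots> = (zeta p ^ p) ^ (i div p) * zeta p ^ (i mod p)" by (simp only: power_add power_mult)
  also have "\<dots> = zeta p ^ (i mod p)" using zeta_p[OF p] by simp
  finally show ?thesis by simp
qed

lemma delta_pos: "delta p > 0"
proof -
  let ?S = "(\<lambda>(i,j). norm (zeta p ^ i - zeta p ^ j)) ` {(i,j). i < p \<and> j < p \<and> i \<noteq> j}"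
  have fin: "finite {(i,j). i < p \<and> j < p \<and> (i::nat) \<noteq> j}"
    by (rule finite_subset[of _ "{..<p} \<times> {..<p}"]) auto
  have "\<forall>s\<in>insert 1 ?S. s > 0"
  proof
    fix s assume "s \<in> insert 1 ?S"
    then show "s > 0"
    proof
      assume "s \<in> ?S"
      then obtain i j where "i < p" "j < p" "i \<noteq> j" "s = norm (zeta p ^ i - zeta p ^ j)" by auto
      then show ?thesis using zeta_inj by fastforce
    qed simp
  qed
  then show ?thesis unfolding delta_def using fin by (subst Min_gr_iff) auto
qed

lemma delta_le: "i < p \<Longrightarrow> j < p \<Longrightarrow> i \<noteq> j \<Longrightarrow> delta p \<le> norm (zeta p ^ i - zeta p ^ j)"
proof -
  assume a: "i < p" "j < p" "i \<noteq> j"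
  have fin: "finite {(i,j). i < p \<and> j < p \<and> (i::nat) \<noteq> j}"
    by (rule finite_subset[of _ "{..<p} \<times> {..<p}"]) auto
  have "norm (zeta p ^ i - zeta p ^ j) \<in> insert 1 ((\<lambda>(i,j). norm (zeta p ^ i - zeta p ^ j)) ` {(i,j). i < p \<and> j < p \<and> i \<noteq> j})"
    using a by (intro insertI2 rev_image_eqI[of "(i,j)"]) auto
  then show ?thesis unfolding delta_def using fin by (intro Min_le) auto
qed

lemma cyc_lt: "i < p \<Longrightarrow> cyc p i = Suc i mod p"
proof -
  assume i: "i < p"
  have d: "distinct [0..<p]" by simp
  have "map (cyc p) [0..<p] = rotate1 [0..<p]" unfolding cyc_def
    using cyclic_rotation[OF d, of 1] by simp
  then have "map (cyc p) [0..<p] ! i = rotate1 [0..<p] ! i" by simp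
  then show ?thesis using i by (simp add: nth_rotate1)
qed

lemma cyc_ge: "p \<le> i \<Longrightarrow> cyc p i = i"
  unfolding cyc_def by (rule id_outside_supp) simp

lemma cyc_permutes: "cyc p permutes {..<p}"
proof -
  have "cycle_of_list [0..<p] permutes set [0..<p]" by (rule cycle_permutes)
  then show ?thesis unfolding cyc_def by (simp add: lessThan_atLeast0)
qed

lemma prod_roots:
  fixes P :: "complex poly"
  shows "degree P = n \<Longrightarrow> coeff P n = 1 \<Longrightarrow> inj_on a {..<n} \<Longrightarrow> (\<forall>i<n. poly P (a i) = 0) \<Longrightarrow> P = (\<Prod>i<n. [:- a i, 1:])"
proof (induction n arbitrary: P)
  case 0
  then show ?case by (metis lessThan_0 prod.empty degree_0_id one_pCons)
next
  case (Suc n)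
  have "poly P (a n) = 0" using Suc.prems(4) by simp
  then obtain Q where PQ: "P = [:- a n, 1:] * Q" by (metis dvdE poly_eq_0_iff_dvd)
  have Qnz: "Q \<noteq> 0" using PQ Suc.prems(1) by auto
  have e1: "degree ([:- a n, 1:] * Q) = degree [:- a n, 1:] + degree Q" by (rule degree_mult_eq) (simp_all add: Qnz)
  have e2: "degree ([:- a n, 1:] * Q) = Suc n" using Suc.prems(1) PQ by (simp only:)
  have e3: "degree [:- a n, 1::complex:] = 1" by simp
  from e1 e2 e3 have dQ: "degree Q = n" by linarith
  have cQ: "coeff Q n = 1"
  proof -
    have l1: "lead_coeff ([:- a n, 1:] * Q) = lead_coeff [:- a n, 1:] * lead_coeff Q" by (rule lead_coeff_mult)
    have l2: "lead_coeff ([:- a n, 1:] * Q) = 1" using Suc.prems(1,2) PQ by (simp only:)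
    have l3: "lead_coeff [:- a n, 1::complex:] = 1" by simp
    from l1 l2 l3 have "lead_coeff Q = 1" by simp
    then show ?thesis using dQ by simp
  qed
  have ia: "inj_on a {..<n}" using Suc.prems(3) by (rule inj_on_subset) auto
  have rQ: "\<forall>i<n. poly Q (a i) = 0"
  proof (intro allI impI)
    fix i assume i: "i < n"
    have "a i \<noteq> a n" using Suc.prems(3) i by (metis inj_onD lessThan_iff less_Suc_eq nat_neq_iff)
    moreover have "poly P (a i) = 0" using Suc.prems(4) i by simp
    ultimately show "poly Q (a i) = 0" using PQ by simp
  qed
  have "Q = (\<Prod>i<n. [:- a i, 1:])" by (rule Suc.IH[OF dQ cQ ia rQ])
  then show ?case using PQ by (simp add: mult.commute)
qed

context
  fixes f0 :: "complex poly" and p :: nat and T :: "complex \<Rightarrow> complex"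
  assumes deg: "degree f0 = p" and mon: "coeff f0 p = 1" and p1: "p \<ge> 1"
    and Thol: "T holomorphic_on {w. RR f0 p < norm w}"
    and Tprop: "\<forall>w. RR f0 p < norm w \<longrightarrow> poly f0 (T w) = w^p \<and> norm (T w - w) \<le> Kc f0 p"
begin

lemma R2_gt: "RR f0 p < R2 f0 p" unfolding R2_def by simp

lemma R2_delta: "2 * Kc f0 p < delta p * R2 f0 p"
proof -
  have d: "delta p > 0" by (rule delta_pos)
  have "2 * Kc f0 p / delta p < R2 f0 p" unfolding R2_def by simp
  then show ?thesis using d by (simp add: divide_less_eq mult.commute)
qed

lemma zw_norm: "norm (zeta p ^ i * w) = norm w"
  by (simp add: norm_mult zeta_norm)

lemma phi_root: "R2 f0 p < norm w \<Longrightarrow> i < p \<Longrightarrow> poly f0 (Phi T p w i) = w^p"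
proof -
  assume w: "R2 f0 p < norm w" and i: "i < p"
  have "RR f0 p < norm (zeta p ^ i * w)" using w R2_gt zw_norm by simp
  then have "poly f0 (T (zeta p ^ i * w)) = (zeta p ^ i * w)^p" using Tprop by blast
  also have "\<dots> = (zeta p ^ p) ^ i * w ^ p" by (simp add: power_mult_distrib power_mult[symmetric] mult.commute)
  also have "\<dots> = w ^ p" using zeta_p[OF p1] by simp
  finally show ?thesis unfolding Phi_def using i by simp
qed

lemma phi_close: "R2 f0 p < norm w \<Longrightarrow> i < p \<Longrightarrow> norm (Phi T p w i - zeta p ^ i * w) \<le> Kc f0 p"
proof -
  assume w: "R2 f0 p < norm w" and i: "i < p"
  have "RR f0 p < norm (zeta p ^ i * w)" using w R2_gt zw_norm by simp
  then show ?thesis using Tprop i unfolding Phi_def by simp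
qed

lemma phi_inj: "R2 f0 p < norm w \<Longrightarrow> inj_on (Phi T p w) {..<p}"
proof (rule inj_onI, rule ccontr)
  fix i j assume w: "R2 f0 p < norm w" and i: "i \<in> {..<p}" and j: "j \<in> {..<p}"
    and e: "Phi T p w i = Phi T p w j" and ne: "i \<noteq> j"
  have wp: "norm w > 0" using w R2_gt Kc_pos[OF deg mon p1] unfolding RR_def R0_def
    using Bc_nonneg[OF deg mon p1] by linarith
  have "delta p * norm w \<le> norm (zeta p ^ i - zeta p ^ j) * norm w"
    using delta_le[of i p j] i j ne wp by (intro mult_right_mono) auto
  also have "\<dots> = norm (zeta p ^ i * w - zeta p ^ j * w)" by (simp only: left_diff_distrib[symmetric] norm_mult)
  also have "\<dots> \<le> norm (Phi T p w i - zeta p ^ i * w) + norm (Phi T p w j - zeta p ^ j * w)"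
  proof -
    have "zeta p ^ i * w - zeta p ^ j * w = (Phi T p w j - zeta p ^ j * w) - (Phi T p w i - zeta p ^ i * w)"
      using e by simp
    then show ?thesis by (metis add.commute norm_triangle_ineq4)
  qed
  also have "\<dots> \<le> 2 * Kc f0 p"
  proof -
    have "i < p" "j < p" using i j by auto
    then have "norm (Phi T p w i - zeta p ^ i * w) \<le> Kc f0 p" "norm (Phi T p w j - zeta p ^ j * w) \<le> Kc f0 p"
      using phi_close[OF w] by auto
    then show ?thesis by linarith
  qed
  finally have a: "delta p * norm w \<le> 2 * Kc f0 p" .
  have "delta p * R2 f0 p < delta p * norm w" using w delta_pos by simp
  then show False using a R2_delta by linarith
qed

lemma phi_PX: "R2 f0 p < norm w \<Longrightarrow> f0 - [:w^p:] = PX p (Phi T p w)"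
proof -
  assume w: "R2 f0 p < norm w"
  have e: "f0 - [:w^p:] = f0 + [:- (w^p):]" by simp
  have d: "degree (f0 - [:w^p:]) = p" unfolding e using deg p1 by (subst degree_add_eq_left) auto
  have c: "coeff (f0 - [:w^p:]) p = 1" using mon p1 by (cases p) auto
  have r: "\<forall>i<p. poly (f0 - [:w^p:]) (Phi T p w i) = 0" using phi_root[OF w] by simp
  show ?thesis unfolding PX_def by (rule prod_roots[OF d c phi_inj[OF w] r])
qed

lemma phi_aspace: "Phi T p w \<in> aspace p"
  unfolding Phi_def aspace_def by simp

lemma phi_holo: "(\<lambda>w. Phi T p w i) holomorphic_on {w. R2 f0 p < norm w}"
proof (cases "i < p")
  case True
  have "(T \<circ> (\<lambda>w. zeta p ^ i * w)) holomorphic_on {w. R2 f0 p < norm w}"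
  proof (rule holomorphic_on_compose_gen[OF _ Thol])
    show "(\<lambda>w. zeta p ^ i * w) holomorphic_on {w. R2 f0 p < norm w}" by (intro holomorphic_intros)
    show "(\<lambda>w. zeta p ^ i * w) ` {w. R2 f0 p < norm w} \<subseteq> {w. RR f0 p < norm w}"
      using R2_gt zw_norm by auto
  qed
  then show ?thesis unfolding Phi_def using True by (simp add: o_def)
next
  case False then show ?thesis unfolding Phi_def by simp
qed

lemma phi_shift: "Phi T p (zeta p * w) = Phi T p w \<circ> cyc p"
proof
  fix i
  show "Phi T p (zeta p * w) i = (Phi T p w \<circ> cyc p) i"
  proof (cases "i < p")
    case True
    have "Suc i mod p < p" using p1 by simp
    moreover have "zeta p ^ (Suc i mod p) = zeta p ^ Suc i" by (rule zeta_mod[OF p1])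
    ultimately show ?thesis unfolding Phi_def using True cyc_lt[OF True]
      by (simp add: mult.assoc mult.commute mult.left_commute)
  next
    case False then show ?thesis unfolding Phi_def using cyc_ge[of p i] by simp
  qed
qed

lemma zeta_nz: "zeta p \<noteq> 0" unfolding zeta_def by simp

lemma phi_shift_inv: "Phi T p w \<circ> inv (cyc p) = Phi T p (w / zeta p)"
proof -
  have "Phi T p w = Phi T p (zeta p * (w / zeta p))" using zeta_nz by simp
  also have "\<dots> = Phi T p (w / zeta p) \<circ> cyc p" by (rule phi_shift)
  finally have "Phi T p w \<circ> inv (cyc p) = Phi T p (w / zeta p) \<circ> (cyc p \<circ> inv (cyc p))"
    by (simp add: o_assoc)
  then show ?thesis using permutes_inv_o(1)[OF cyc_permutes] by simp
qed

end

definition Gam :: "(complex \<Rightarrow> complex) \<Rightarrow> nat \<Rightarrow> complex poly \<Rightarrow> (nat \<Rightarrow> nat) \<Rightarrow> (nat \<Rightarrow> complex) set" where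
  "Gam T p f0 \<sigma> = clos p (\<lambda>w. Phi T p w \<circ> \<sigma>) {w. R2 f0 p < norm w}"

lemma PX_roots: "poly (PX n z) t = 0 \<longleftrightarrow> t \<in> z ` {..<n}"
  unfolding PX_def by (auto simp: poly_prod)

lemma D_open: "open {w::complex. r < norm w}"
  by (intro open_Collect_less continuous_intros)

lemma D_conn: "connected {w::complex. r < norm w}"
proof -
  have "{w::complex. r < norm w} = - cball 0 r" by (auto simp: dist_norm)
  moreover have "connected (- cball (0::complex) r)"
    by (rule connected_complement_bounded_convex) auto
  ultimately show ?thesis by simp
qed

lemma D_ne: "{w::complex. r < norm w} \<noteq> {}"
proof -
  have "r < norm (complex_of_real (\<bar>r\<bar> + 1))" by simp
  then show ?thesis by blast
qed

lemma rho_cycle: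
  assumes s: "\<sigma> permutes {..<p}"
  shows "is_full_cycle p (inv \<sigma> \<circ> cyc p \<circ> \<sigma>)"
proof -
  have isg: "inv \<sigma> permutes {..<p}" by (rule permutes_inv[OF s])
  have "inv \<sigma> \<circ> cycle_of_list [0..<p] \<circ> inv (inv \<sigma>) = cycle_of_list (map (inv \<sigma>) [0..<p])"
    by (rule conjugation_of_cycle) (simp_all add: permutes_bij[OF isg])
  then have e: "inv \<sigma> \<circ> cyc p \<circ> \<sigma> = cycle_of_list (map (inv \<sigma>) [0..<p])"
    unfolding cyc_def permutes_inv_inv[OF s] .
  have d: "distinct (map (inv \<sigma>) [0..<p])"
    using permutes_inj[OF isg] by (simp add: distinct_map inj_on_subset[of _ UNIV])
  have st: "set (map (inv \<sigma>) [0..<p]) = {..<p}"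
    using permutes_image[OF isg] by (simp add: lessThan_atLeast0)
  have "cycle_of_list (map (inv \<sigma>) [0..<p]) permutes set (map (inv \<sigma>) [0..<p])" by (rule cycle_permutes)
  then have pm: "inv \<sigma> \<circ> cyc p \<circ> \<sigma> permutes {..<p}" using e st by simp
  show ?thesis unfolding is_full_cycle_def
    using pm d st e by (intro conjI exI[of _ "map (inv \<sigma>) [0..<p]"]) auto
qed

context
  fixes f0 :: "complex poly" and p :: nat and T :: "complex \<Rightarrow> complex"
  assumes deg: "degree f0 = p" and mon: "coeff f0 p = 1" and p1: "p \<ge> 1"
    and Thol: "T holomorphic_on {w. RR f0 p < norm w}"
    and Tprop: "\<forall>w. RR f0 p < norm w \<longrightarrow> poly f0 (T w) = w^p \<and> norm (T w - w) \<le> Kc f0 p"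
begin

lemma phi_cover:
  assumes y: "y \<in> Sk f0 p p" and big: "R2 f0 p ^ p < norm (y p)"
  shows "\<exists>\<sigma> w. \<sigma> permutes {..<p} \<and> R2 f0 p < norm w \<and> (\<lambda>i. if i < p then y i else 0) = Phi T p w \<circ> \<sigma>"
proof -
  have R2p: "R2 f0 p > 0" using R2_gt[OF deg mon p1 Thol Tprop] Kc_pos[OF deg mon p1] Bc_nonneg[OF deg mon p1]
    unfolding RR_def R0_def by linarith
  have ynz: "y p \<noteq> 0" using big R2p by (metis norm_zero not_less zero_le_power less_imp_le)
  define w where "w = exp (Ln (y p) / of_nat p)"
  have wp: "w ^ p = y p"
  proof -
    have "w ^ p = exp (of_nat p * (Ln (y p) / of_nat p))" unfolding w_def by (rule exp_of_nat_mult[symmetric])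
    also have "\<dots> = y p" using p1 ynz by simp
    finally show ?thesis .
  qed
  have wbig: "R2 f0 p < norm w"
  proof (rule power_less_imp_less_base)
    show "R2 f0 p ^ p < norm w ^ p" using big wp by (simp add: norm_power[symmetric])
  qed simp
  have e: "PX p y = PX p (Phi T p w)"
    using S_full[OF deg mon p1 y] phi_PX[OF deg mon p1 Thol Tprop wbig] wp by simp
  have im: "y ` {..<p} = Phi T p w ` {..<p}"
  proof -
    have "y ` {..<p} = {t. poly (PX p y) t = 0}" using PX_roots by blast
    also have "\<dots> = {t. poly (PX p (Phi T p w)) t = 0}" using e by simp
    also have "\<dots> = Phi T p w ` {..<p}" using PX_roots by blast
    finally show ?thesis .
  qed
  have injP: "inj_on (Phi T p w) {..<p}" by (rule phi_inj[OF deg mon p1 Thol Tprop wbig])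
  have "card (y ` {..<p}) = card {..<p}" using im card_image[OF injP] by simp
  then have injy: "inj_on y {..<p}" by (rule eq_card_imp_inj_on[rotated]) simp
  define \<sigma> where "\<sigma> i = (if i < p then inv_into {..<p} (Phi T p w) (y i) else i)" for i
  have sin: "\<sigma> i < p" and sv: "Phi T p w (\<sigma> i) = y i" if i: "i < p" for i
  proof -
    have yi: "y i \<in> Phi T p w ` {..<p}" using im i by blast
    show "\<sigma> i < p" unfolding \<sigma>_def using i inv_into_into[OF yi] by simp
    show "Phi T p w (\<sigma> i) = y i" unfolding \<sigma>_def using i f_inv_into_f[OF yi] by simp
  qed
  have injs: "inj_on \<sigma> {..<p}"
  proof (rule inj_onI)
    fix i j assume i: "i \<in> {..<p}" and j: "j \<in> {..<p}" and e: "\<sigma> i = \<sigma> j"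
    then have "y i = y j" using sv by (metis lessThan_iff)
    then show "i = j" using injy i j by (simp add: inj_on_def)
  qed
  have "\<sigma> ` {..<p} \<subseteq> {..<p}" using sin by auto
  then have "\<sigma> ` {..<p} = {..<p}" using injs by (intro endo_inj_surj) auto
  then have "bij_betw \<sigma> {..<p} {..<p}" using injs by (simp add: bij_betw_def)
  then have sp: "\<sigma> permutes {..<p}" by (rule bij_imp_permutes) (simp add: \<sigma>_def)
  have "(\<lambda>i. if i < p then y i else 0) = Phi T p w \<circ> \<sigma>"
  proof
    fix i show "(if i < p then y i else 0) = (Phi T p w \<circ> \<sigma>) i"
    proof (cases "i < p")
      case True then show ?thesis using sv[OF True] by simp
    next
      case False then show ?thesis by (simp add: \<sigma>_def Phi_def)
    qed
  qed
  then show ?thesis using sp wbig by blast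
qed

lemma gam_irred:
  assumes s: "\<sigma> permutes {..<p}"
  shows "zariski_irreducible p (Gam T p f0 \<sigma>)"
  unfolding Gam_def
proof (rule clos_irred[OF D_open D_conn D_ne])
  fix i assume "i < p"
  show "(\<lambda>w. (Phi T p w \<circ> \<sigma>) i) holomorphic_on {w. R2 f0 p < norm w}"
    using phi_holo[OF deg mon p1 Thol Tprop, of "\<sigma> i"] by simp
next
  fix w show "Phi T p w \<circ> \<sigma> \<in> aspace p"
    unfolding aspace_def Phi_def using permutes_not_in[OF s] by auto
qed

lemma gam_sub_C:
  assumes s: "\<sigma> permutes {..<p}" and f0: "f0 = PX p c"
  shows "Gam T p f0 \<sigma> \<subseteq> elem_sym_curve p c"
  unfolding Gam_def
proof (rule clos_min[OF C_closed])
  show "(\<lambda>w. Phi T p w \<circ> \<sigma>) ` {w. R2 f0 p < norm w} \<subseteq> elem_sym_curve p c"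
  proof
    fix x assume "x \<in> (\<lambda>w. Phi T p w \<circ> \<sigma>) ` {w. R2 f0 p < norm w}"
    then obtain w where w: "R2 f0 p < norm w" and x: "x = Phi T p w \<circ> \<sigma>" by auto
    have xa: "x \<in> aspace p" unfolding x aspace_def Phi_def using permutes_not_in[OF s] by auto
    have "PX p x = (\<Prod>i<p. [:- Phi T p w (\<sigma> i), 1:])" unfolding PX_def x by simp
    also have "\<dots> = PX p (Phi T p w)" unfolding PX_def
      by (rule prod.reindex_bij_betw[OF permutes_imp_bij[OF s], of "\<lambda>j. [:- Phi T p w j, 1:]"])
    also have "\<dots> = PX p c - [:w^p:]" using phi_PX[OF deg mon p1 Thol Tprop w] f0 by simp
    finally show "x \<in> elem_sym_curve p c" using C_iff[OF p1] xa by blast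
  qed
qed

lemma gam_inv:
  assumes s: "\<sigma> permutes {..<p}"
  shows "perm_pt (inv \<sigma> \<circ> cyc p \<circ> \<sigma>) ` Gam T p f0 \<sigma> = Gam T p f0 \<sigma>"
proof -
  define \<rho> where "\<rho> = inv \<sigma> \<circ> cyc p \<circ> \<sigma>"
  have isg: "inv \<sigma> permutes {..<p}" by (rule permutes_inv[OF s])
  have cp: "cyc p permutes {..<p}" by (rule cyc_permutes)
  have rp: "\<rho> permutes {..<p}" unfolding \<rho>_def
    by (intro permutes_compose[OF s] permutes_compose[OF cp isg])
  have irp: "inv \<rho> permutes {..<p}" by (rule permutes_inv[OF rp])
  have s1: "\<sigma> \<circ> inv \<sigma> = id" "inv \<sigma> \<circ> \<sigma> = id" using permutes_inv_o[OF s] by auto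
  have c1: "cyc p \<circ> inv (cyc p) = id" "inv (cyc p) \<circ> cyc p = id" using permutes_inv_o[OF cp] by auto
  have invr: "inv \<rho> = inv \<sigma> \<circ> inv (cyc p) \<circ> \<sigma>"
  proof (rule inv_unique_comp)
    have "\<rho> \<circ> (inv \<sigma> \<circ> inv (cyc p) \<circ> \<sigma>) = inv \<sigma> \<circ> cyc p \<circ> (\<sigma> \<circ> inv \<sigma>) \<circ> inv (cyc p) \<circ> \<sigma>"
      unfolding \<rho>_def by (simp add: o_assoc)
    also have "\<dots> = inv \<sigma> \<circ> (cyc p \<circ> inv (cyc p)) \<circ> \<sigma>" using s1 by (simp add: o_assoc)
    also have "\<dots> = id" using s1 c1 by simp
    finally show "\<rho> \<circ> (inv \<sigma> \<circ> inv (cyc p) \<circ> \<sigma>) = id" .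
    have "(inv \<sigma> \<circ> inv (cyc p) \<circ> \<sigma>) \<circ> \<rho> = inv \<sigma> \<circ> inv (cyc p) \<circ> (\<sigma> \<circ> inv \<sigma>) \<circ> cyc p \<circ> \<sigma>"
      unfolding \<rho>_def by (simp add: o_assoc)
    also have "\<dots> = inv \<sigma> \<circ> (inv (cyc p) \<circ> cyc p) \<circ> \<sigma>" using s1 by (simp add: o_assoc)
    also have "\<dots> = id" using s1 c1 by simp
    finally show "(inv \<sigma> \<circ> inv (cyc p) \<circ> \<sigma>) \<circ> \<rho> = id" .
  qed
  have iir: "inv (inv \<rho>) = \<rho>" by (rule permutes_inv_inv[OF rp])
  have nz: "norm (w / zeta p) = norm w" "norm (zeta p * w) = norm w" for w
    using zeta_norm[of p 1] by (simp_all add: norm_divide norm_mult)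
  have m1: "\<exists>w'\<in>{w. R2 f0 p < norm w}. perm_pt \<rho> (Phi T p w \<circ> \<sigma>) = Phi T p w' \<circ> \<sigma>"
    if w: "w \<in> {w. R2 f0 p < norm w}" for w
  proof -
    have "perm_pt \<rho> (Phi T p w \<circ> \<sigma>) = Phi T p w \<circ> (\<sigma> \<circ> inv \<sigma>) \<circ> inv (cyc p) \<circ> \<sigma>"
      unfolding perm_pt_def invr by (simp add: o_assoc)
    also have "\<dots> = (Phi T p w \<circ> inv (cyc p)) \<circ> \<sigma>" using s1 by (simp add: o_assoc)
    also have "\<dots> = Phi T p (w / zeta p) \<circ> \<sigma>" using phi_shift_inv[OF deg mon p1 Thol Tprop] by simp
    finally show ?thesis using w nz by (intro bexI[of _ "w / zeta p"]) auto
  qed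
  have m2: "\<exists>w'\<in>{w. R2 f0 p < norm w}. perm_pt (inv \<rho>) (Phi T p w \<circ> \<sigma>) = Phi T p w' \<circ> \<sigma>"
    if w: "w \<in> {w. R2 f0 p < norm w}" for w
  proof -
    have "perm_pt (inv \<rho>) (Phi T p w \<circ> \<sigma>) = Phi T p w \<circ> (\<sigma> \<circ> inv \<sigma>) \<circ> cyc p \<circ> \<sigma>"
      unfolding perm_pt_def iir by (simp add: \<rho>_def o_assoc)
    also have "\<dots> = (Phi T p w \<circ> cyc p) \<circ> \<sigma>" using s1 by (simp add: o_assoc)
    also have "\<dots> = Phi T p (zeta p * w) \<circ> \<sigma>" using phi_shift[OF deg mon p1 Thol Tprop] by simp
    finally show ?thesis using w nz by (intro bexI[of _ "zeta p * w"]) auto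
  qed
  have sub1: "perm_pt \<rho> x \<in> Gam T p f0 \<sigma>" if "x \<in> Gam T p f0 \<sigma>" for x
    using clos_perm[OF rp m1] that unfolding Gam_def by blast
  have sub2: "perm_pt (inv \<rho>) x \<in> Gam T p f0 \<sigma>" if "x \<in> Gam T p f0 \<sigma>" for x
    using clos_perm[OF irp m2] that unfolding Gam_def by blast
  have bk: "perm_pt \<rho> (perm_pt (inv \<rho>) x) = x" for x
    unfolding perm_pt_def iir using permutes_inv_o(1)[OF rp] by (simp add: comp_assoc)
  have "perm_pt \<rho> ` Gam T p f0 \<sigma> = Gam T p f0 \<sigma>"
  proof
    show "perm_pt \<rho> ` Gam T p f0 \<sigma> \<subseteq> Gam T p f0 \<sigma>" using sub1 by blast
    show "Gam T p f0 \<sigma> \<subseteq> perm_pt \<rho> ` Gam T p f0 \<sigma>"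
    proof
      fix x assume x: "x \<in> Gam T p f0 \<sigma>"
      then have "perm_pt (inv \<rho>) x \<in> Gam T p f0 \<sigma>" by (rule sub2)
      then show "x \<in> perm_pt \<rho> ` Gam T p f0 \<sigma>" using bk[of x] by (metis image_eqI)
    qed
  qed
  then show ?thesis unfolding \<rho>_def .
qed

end

theorem lemma3p4:
  fixes p :: nat and v :: "nat \<Rightarrow> real" and Z :: "(nat \<Rightarrow> complex) set"
  assumes "prime p"
    and "inj_on v {..<p}"
    and "irreducible_component p (elem_sym_curve p (\<lambda>i. complex_of_real (v i))) Z"
  shows "\<exists>\<sigma>. is_full_cycle p \<sigma> \<and> perm_pt \<sigma> ` Z = Z"
proof -
  define c where "c = (\<lambda>i. complex_of_real (v i))"
  define f0 where "f0 = PX p c"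
  have p1: "p \<ge> 1" using prime_ge_2_nat[OF assms(1)] by simp
  have deg: "degree f0 = p" unfolding f0_def by (rule PX_deg)
  have mon: "coeff f0 p = 1" unfolding f0_def by (rule PX_lead)
  obtain T where Thol: "T holomorphic_on {w. RR f0 p < norm w}"
    and Tprop: "\<forall>w. RR f0 p < norm w \<longrightarrow> poly f0 (T w) = w^p \<and> norm (T w - w) \<le> Kc f0 p"
    using root_branch[OF deg mon p1] by blast
  have comp: "irreducible_component p (elem_sym_curve p c) Z" using assms(3) unfolding c_def .
  then have Zirr: "zariski_irreducible p Z" and ZC: "Z \<subseteq> elem_sym_curve p c"
    and Zmax: "\<And>W. zariski_irreducible p W \<Longrightarrow> Z \<subseteq> W \<Longrightarrow> W \<subseteq> elem_sym_curve p c \<Longrightarrow> W = Z"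
    unfolding irreducible_component_def by blast+
  define P where "P = {\<sigma>. \<sigma> permutes {..<p}}"
  have finP: "finite P" unfolding P_def by (rule finite_permutations) simp
  let ?D = "{w. R2 f0 p < norm w}"
  have cover: "elem_sym_curve p c \<subseteq> \<Union>(Gam T p f0 ` P)"
  proof
    fix x assume xC: "x \<in> elem_sym_curve p c"
    obtain m where xa: "x \<in> aspace p" and xm: "PX p x = PX p c - [:m:]" using C_iff[OF p1] xC by blast
    show "x \<in> \<Union>(Gam T p f0 ` P)"
    proof (rule ccontr)
      assume nx: "x \<notin> \<Union>(Gam T p f0 ` P)"
      have "\<forall>\<sigma>\<in>P. \<exists>g. g \<in> poly_fun p \<and> (\<forall>w\<in>?D. g (Phi T p w \<circ> \<sigma>) = 0) \<and> g x \<noteq> 0"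
      proof
        fix \<sigma> assume "\<sigma> \<in> P"
        then have "x \<notin> Gam T p f0 \<sigma>" using nx by blast
        then show "\<exists>g. g \<in> poly_fun p \<and> (\<forall>w\<in>?D. g (Phi T p w \<circ> \<sigma>) = 0) \<and> g x \<noteq> 0"
          using xa unfolding Gam_def clos_def by blast
      qed
      then have "\<exists>gs. \<forall>\<sigma>\<in>P. gs \<sigma> \<in> poly_fun p \<and> (\<forall>w\<in>?D. gs \<sigma> (Phi T p w \<circ> \<sigma>) = 0) \<and> gs \<sigma> x \<noteq> 0"
        by (rule bchoice)
      then obtain gs where gs: "\<forall>\<sigma>\<in>P. gs \<sigma> \<in> poly_fun p \<and> (\<forall>w\<in>?D. gs \<sigma> (Phi T p w \<circ> \<sigma>) = 0) \<and> gs \<sigma> x \<noteq> 0"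
        by blast
      define G where "G y = (\<Prod>\<sigma>\<in>P. gs \<sigma> y)" for y
      have Gp: "G \<in> poly_fun p"
      proof -
        have "(\<lambda>y. \<Prod>\<sigma>\<in>P. gs \<sigma> y) \<in> poly_fun p" using finP gs by (intro pf_prod) auto
        then show ?thesis unfolding G_def[abs_def] .
      qed
      have GSp: "G \<in> poly_fun (Suc p)" using pf_mono[OF Gp] by simp
      have Gx: "G x \<noteq> 0" unfolding G_def using finP gs by (simp add: prod_zero_iff)
      have H: "\<forall>y\<in>Sk f0 p p. R2 f0 p ^ p < norm (y p) \<longrightarrow> G y = 0"
      proof (intro ballI impI)
        fix y assume y: "y \<in> Sk f0 p p" and big: "R2 f0 p ^ p < norm (y p)"
        obtain \<sigma> w where s: "\<sigma> permutes {..<p}" and w: "R2 f0 p < norm w"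
          and e: "(\<lambda>i. if i < p then y i else 0) = Phi T p w \<circ> \<sigma>"
          using phi_cover[OF deg mon p1 Thol Tprop y big] by blast
        have "G y = G (\<lambda>i. if i < p then y i else 0)" by (rule pf_indep[OF Gp]) simp
        also have "\<dots> = G (Phi T p w \<circ> \<sigma>)" using e by simp
        also have "\<dots> = 0"
        proof -
          have sP: "\<sigma> \<in> P" using s unfolding P_def by simp
          then have "gs \<sigma> (Phi T p w \<circ> \<sigma>) = 0" using gs w by blast
          then show ?thesis unfolding G_def using finP sP by (auto simp: prod_zero_iff)
        qed
        finally show "G y = 0" .
      qed
      have allz: "\<forall>y\<in>Sk f0 p p. G y = 0" by (rule elim_final[OF deg mon p1 GSp H])
      define x' where "x' = x(p := m)"
      have PXe: "PX p x' = PX p x" unfolding PX_def x'_def by (intro prod.cong) auto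
      have "f0 - [:x' p:] = PX p x' * 1" using xm PXe unfolding f0_def x'_def by simp
      then have "x' \<in> Sk f0 p p" by (rule S_of_fact[OF deg mon p1, rotated]) simp
      then have "G x' = 0" using allz by blast
      moreover have "G x = G x'" by (rule pf_indep[OF Gp]) (simp add: x'_def)
      ultimately show False using Gx by simp
    qed
  qed
  have clP: "zariski_closed p (Gam T p f0 \<sigma>)" if "\<sigma> \<in> P" for \<sigma> unfolding Gam_def by (rule clos_closed)
  have ZU: "Z \<subseteq> \<Union>(Gam T p f0 ` P)" by (rule subset_trans[OF ZC cover])
  have "\<exists>\<sigma>\<in>P. Z \<subseteq> Gam T p f0 \<sigma>" by (rule irr_cover[OF Zirr finP clP ZU])
  then obtain \<sigma> where sP: "\<sigma> \<in> P" and ZG: "Z \<subseteq> Gam T p f0 \<sigma>" by blast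
  have s: "\<sigma> permutes {..<p}" using sP unfolding P_def by simp
  have GZ: "Gam T p f0 \<sigma> = Z"
    by (rule Zmax[OF gam_irred[OF deg mon p1 Thol Tprop s] ZG gam_sub_C[OF deg mon p1 Thol Tprop s f0_def]])
  show ?thesis
    using rho_cycle[OF s] gam_inv[OF deg mon p1 Thol Tprop s] GZ by auto
qed

end
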